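(* Let $n\ge1$ and $L,\underline b>0$. Let $\mathcal{F}_{L,\underline b}$ be the set of all $f\in C^1(\mathbb{R}^{2n},\mathbb{R}^n)$, $f=f(x,u)$ with $x,u\in\mathbb{R}^n$, such that $\left\|\frac{\partial f}{\partial x}\right\|\le L$ and $\mathrm{Sym}\left[\frac{\partial f}{\partial u}\right]\ge\underline b I_n$ for all $x,u\in\mathbb{R}^n$. Let $$\Omega_{pi}=\left\{(k_p,k_i)\in(0,\infty)^2\;:\; k_p^2\underline b>k_pL+k_i+L^2/(4\underline b)\right\}.$$ Consider the closed-loop system $\dot x=f(x,u)$, $u(t)=k_pe(t)+k_i\int_0^te(s)\,ds$, $e(t)=y^*-x(t)$, with setpoint $y^*\in\mathbb{R}^n$. Then: (1) If $(k_p,k_i)\in\Omega_{pi}$, then $\lim_{t\to\infty}x(t)=y^*$ for every $f\in\mathcal{F}_{L,\underline b}$, every $y^*\in\mathbb{R}^n$ and every initial state $x(0)\in\mathbb{R}^n$. (2) If $n=1$, let $\Omega'_{pi}=\{(k_p,k_i)\in\mathbb{R}^2: k_p\underline b>L,\ k_i>0\}$. If $(k_p,k_i)\in\Omega'_{pi}$, then $\lim_{t\to\infty}x(t)=y^*$ for every $f\in\mathcal{F}_{L,\underline b}$, every $y^*\in\mathbb{R}$ and every $x(0)\in\mathbb{R}$. Conversely, if $(k_p,k_i)\in\mathbb{R}^2$ is such that $\lim_{t\to\infty}x(t)=y^*$ for every $f\in\mathcal{F}_{L,\underline b}$, every $y^*\in\mathbb{R}$ and every $x(0)\in\mathbb{R}$,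 then $(k_p,k_i)\in\Omega'_{pi}$.
   Context: $\|\cdot\|$ denotes the Euclidean norm of vectors and the induced operator norm of matrices. For a square matrix $P$, $\mathrm{Sym}[P]=(P+P^{\mathsf T})/2$. For symmetric matrices, $S_1\ge S_2$ means $S_1-S_2$ is positive semidefinite. $\frac{\partial f}{\partial x},\frac{\partial f}{\partial u}$ are the $n\times n$ Jacobian matrices of $f$ with respect to $x$ and $u$; when $n=1$ the conditions read $|\partial f/\partial x|\le L$ and $\partial f/\partial u\ge\underline b$. *)

theory Defs
  imports "HOL-Analysis.Analysis"
begin

text \<open>A map f(x,u) of two vector arguments, viewed as a map on R^n x R^n = R^(2n).\<close>
definition uncurried :: "('a \<Rightarrow> 'b \<Rightarrow> 'c) \<Rightarrow> 'a \<times> 'b \<Rightarrow> 'c" where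
  "uncurried f = (\<lambda>p. f (fst p) (snd p))"

definition C1_map :: "('a::real_normed_vector \<Rightarrow> 'b::real_normed_vector) \<Rightarrow> bool" where
  "C1_map g \<longleftrightarrow> (\<exists>Dg. (\<forall>p. (g has_derivative blinfun_apply (Dg p)) (at p)) \<and> continuous_on UNIV Dg)"

definition jac_x :: "(real^'n \<Rightarrow> real^'n \<Rightarrow> real^'n) \<Rightarrow> real^'n \<Rightarrow> real^'n \<Rightarrow> real^'n^'n" where
  "jac_x f x u = matrix (\<lambda>v. frechet_derivative (uncurried f) (at (x, u)) (v, 0))"

definition jac_u :: "(real^'n \<Rightarrow> real^'n \<Rightarrow> real^'n) \<Rightarrow> real^'n \<Rightarrow> real^'n \<Rightarrow> real^'n^'n" where
  "jac_u f x u = matrix (\<lambda>w. frechet_derivative (uncurried f) (at (x, u)) (0, w))"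

definition op_norm :: "real^'n^'m \<Rightarrow> real" where
  "op_norm P = onorm (\<lambda>v. P *v v)"

definition Sym :: "real^'n^'n \<Rightarrow> real^'n^'n" where
  "Sym P = (1/2) *\<^sub>R (P + transpose P)"

definition psd :: "real^'n^'n \<Rightarrow> bool" where
  "psd S \<longleftrightarrow> (\<forall>v. 0 \<le> v \<bullet> (S *v v))"

definition loewner_ge :: "real^'n^'n \<Rightarrow> real^'n^'n \<Rightarrow> bool" where
  "loewner_ge S1 S2 \<longleftrightarrow> psd (S1 - S2)"

definition F_class :: "real \<Rightarrow> real \<Rightarrow> (real^'n \<Rightarrow> real^'n \<Rightarrow> real^'n) set" where
  "F_class L b = {f. C1_map (uncurried f) \<and>
     (\<forall>x u. op_norm (jac_x f x u) \<le> L \<and> loewner_ge (Sym (jac_u f x u)) (b *\<^sub>R mat 1))}"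

definition Omega_pi :: "real \<Rightarrow> real \<Rightarrow> (real \<times> real) set" where
  "Omega_pi L b = {(kp, ki). kp > 0 \<and> ki > 0 \<and> kp^2 * b > kp * L + ki + L^2 / (4 * b)}"

definition Omega_pi' :: "real \<Rightarrow> real \<Rightarrow> (real \<times> real) set" where
  "Omega_pi' L b = {(kp, ki). kp * b > L \<and> ki > 0}"

definition PI_solution ::
  "(real^'n \<Rightarrow> real^'n \<Rightarrow> real^'n) \<Rightarrow> real \<Rightarrow> real \<Rightarrow> real^'n \<Rightarrow> (real \<Rightarrow> real^'n) \<Rightarrow> bool" where
  "PI_solution f kp ki y x \<longleftrightarrow>
     (\<forall>t\<ge>0. (x has_vector_derivative
        f (x t) (kp *\<^sub>R (y - x t) + ki *\<^sub>R integral {0..t} (\<lambda>s. y - x s))) (at t within {0..}))"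

end

theory Submission
  imports Defs
begin

lemma inner_vmult_same: "(v::real^'n) \<bullet> (v v* A) = v \<bullet> (A *v v)"
  unfolding inner_vec_def matrix_vector_mult_def vector_matrix_mult_def
  apply (simp add: sum_distrib_left)
  apply (subst sum.swap)
  apply (simp add: mult_ac)
  done
lemma inner_transpose_same: "(v::real^'n) \<bullet> (transpose A *v v) = v \<bullet> (A *v v)"
  using inner_vmult_same by simp

lemma scaleR_mv: "((c::real) *\<^sub>R A) *v (v::real^'n) = c *\<^sub>R (A *v v)"
  by (simp add: matrix_vector_mult_def vec_eq_iff sum_distrib_left mult_ac)

lemma F_class_D:
  assumes "f \<in> F_class L b"
  shows "\<exists>Dg. (\<forall>p. (uncurried f has_derivative blinfun_apply (Dg p)) (at p)) \<and>
    continuous_on UNIV Dg \<and>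
    (\<forall>x u. op_norm (matrix (\<lambda>v. blinfun_apply (Dg (x,u)) (v, 0))) \<le> L) \<and>
    (\<forall>x u w. (w::real^'n) \<bullet> blinfun_apply (Dg (x,u)) (0, w) \<ge> b * norm w ^ 2)"
proof -
  from assms obtain Dg where D: "\<And>p. (uncurried f has_derivative blinfun_apply (Dg p)) (at p)"
    and C: "continuous_on UNIV Dg"
    and J: "\<And>x u. op_norm (jac_x f x u) \<le> L \<and> loewner_ge (Sym (jac_u f x u)) (b *\<^sub>R mat 1)"
    unfolding F_class_def C1_map_def by blast
  have fd: "\<And>p. frechet_derivative (uncurried f) (at p) = blinfun_apply (Dg p)"
    using D frechet_derivative_at by metis
  have jx: "\<And>x u. jac_x f x u = matrix (\<lambda>v. blinfun_apply (Dg (x,u)) (v, 0))"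
    unfolding jac_x_def fd by simp
  have lin: "bounded_linear (\<lambda>w::real^'n. blinfun_apply (Dg (x,u)) (0, w))" for x u
      by (intro bounded_linear_compose[OF blinfun.bounded_linear_right]) (rule bounded_linear_Pair[OF bounded_linear_zero bounded_linear_ident])
  have X: "op_norm (matrix (\<lambda>v. blinfun_apply (Dg (x,u)) (v, 0))) \<le> L" for x u
      using J[of x u] jx[of x u] by simp
  have U: "(w::real^'n) \<bullet> blinfun_apply (Dg (x,u)) (0, w) \<ge> b * norm w ^ 2" for x u w
    proof -
      let ?J = "matrix (\<lambda>w::real^'n. blinfun_apply (Dg (x,u)) (0, w))"
      have ju: "jac_u f x u = ?J" unfolding jac_u_def fd by simp
      have "psd (Sym ?J - b *\<^sub>R mat 1)" using J[of x u] ju unfolding loewner_ge_def by metis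
      then have "0 \<le> w \<bullet> ((Sym ?J - b *\<^sub>R mat 1) *v w)" unfolding psd_def by blast
      also have "w \<bullet> ((Sym ?J - b *\<^sub>R mat 1) *v w) = w \<bullet> (?J *v w) - b * (w \<bullet> w)"
        unfolding Sym_def
        by (simp add: matrix_vector_mult_diff_rdistrib matrix_vector_mult_add_rdistrib inner_diff_right inner_add_right
           inner_transpose_same inner_vmult_same scaleR_mv inner_commute)
      also have "?J *v w = blinfun_apply (Dg (x,u)) (0, w)" using fun_cong[OF matrix_vector_mul(3)[OF lin[of x u]], of w] by simp
      finally show ?thesis by (simp add: power2_norm_eq_inner del: matrix_vector_mul)
    qed
  show ?thesis
    apply (rule exI[of _ Dg])
    apply (intro conjI allI)
       apply (rule D)
      apply (rule C)
     apply (rule X)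
    apply (rule U)
    done
qed

lemma F_class_props:
  assumes "f \<in> F_class L b"
  shows "continuous_on UNIV (uncurried f)"
    and "\<And>x u1 u2. (u1 - u2) \<bullet> (f x u1 - f x u2) \<ge> b * norm (u1 - u2) ^ 2"
    and "\<And>x1 x2 u. norm (f x1 u - f (x2::real^'n) u) \<le> L * norm (x1 - x2)"
proof -
  obtain Dg where D: "\<And>p. (uncurried f has_derivative blinfun_apply (Dg p)) (at p)"
    and C: "continuous_on UNIV Dg"
    and Jx: "\<And>x u. op_norm (matrix (\<lambda>v. blinfun_apply (Dg (x,u)) (v, 0))) \<le> L"
    and Ju: "\<And>x u w. (w::real^'n) \<bullet> blinfun_apply (Dg (x,u)) (0, w) \<ge> b * norm w ^ 2"
    using F_class_D[OF assms] by metis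
  show "continuous_on UNIV (uncurried f)"
    using D has_derivative_continuous continuous_at_imp_continuous_on by blast
  show "(u1 - u2) \<bullet> (f x u1 - f x u2) \<ge> b * norm (u1 - u2) ^ 2" for x u1 u2
  proof -
    define w where "w = u1 - u2"
    define h where "h = (\<lambda>s::real. w \<bullet> uncurried f (x, u2 + s *\<^sub>R w))"
    have dh: "(h has_derivative (\<lambda>ds. w \<bullet> blinfun_apply (Dg (x, u2 + s *\<^sub>R w)) (0, ds *\<^sub>R w))) (at s within {0..1})" for s
    proof -
      have "((\<lambda>s. (x, u2 + s *\<^sub>R w)) has_derivative (\<lambda>ds. (0, ds *\<^sub>R w))) (at s within {0..1})"
        by (auto intro!: derivative_eq_intros)
      from has_derivative_compose[OF this D[THEN has_derivative_at_withinI]]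
      have "((\<lambda>s. uncurried f (x, u2 + s *\<^sub>R w)) has_derivative (\<lambda>ds. blinfun_apply (Dg (x, u2 + s *\<^sub>R w)) (0, ds *\<^sub>R w))) (at s within {0..1})"
        by (simp add: o_def)
      then show ?thesis unfolding h_def
        by (rule has_derivative_inner_right)
    qed
    obtain s where "s \<in> {0..1}" and eq: "h 1 - h 0 = w \<bullet> blinfun_apply (Dg (x, u2 + s *\<^sub>R w)) (0, (1 - 0) *\<^sub>R w)"
      using mvt_very_simple[of 0 1 h, OF _ dh] by force
    have "h 1 - h 0 = w \<bullet> (f x u1 - f x u2)" unfolding h_def uncurried_def w_def by (simp add: inner_diff_right)
    with eq Ju[of w x "u2 + s *\<^sub>R w"] show ?thesis unfolding w_def by simp
  qed
  show "norm (f x1 u - f (x2::real^'n) u) \<le> L * norm (x1 - x2)" for x1 x2 u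
  proof -
    have lin: "bounded_linear (\<lambda>v::real^'n. blinfun_apply (Dg (x,u)) (v, 0))" for x
        by (intro bounded_linear_compose[OF blinfun.bounded_linear_right]) (rule bounded_linear_Pair[OF bounded_linear_ident bounded_linear_zero])
    have dg: "((\<lambda>x. f x u) has_derivative (\<lambda>v. blinfun_apply (Dg (x,u)) (v, 0))) (at x within UNIV)" for x
    proof -
      have "((\<lambda>x. (x, u)) has_derivative (\<lambda>v. (v, 0))) (at x)"
        by (auto intro!: derivative_eq_intros)
      from has_derivative_compose[OF this D]
      show ?thesis by (simp add: o_def uncurried_def)
    qed
    have on: "onorm (\<lambda>v. blinfun_apply (Dg (x,u)) (v, 0)) \<le> L" for x
    proof -
      have "op_norm (matrix (\<lambda>v. blinfun_apply (Dg (x,u)) (v, 0))) = onorm (\<lambda>v. blinfun_apply (Dg (x,u)) (v, 0))"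
        unfolding op_norm_def using matrix_vector_mul(3)[OF lin] by (simp only:)
      then show ?thesis using Jx by metis
    qed
    show ?thesis
      using differentiable_bound[OF convex_UNIV dg on] by simp
  qed
qed

lemma deriv_upper:
  fixes F :: "real \<Rightarrow> real"
  assumes "a \<le> b" "continuous_on {a..b} F"
    "\<And>t. a < t \<Longrightarrow> t < b \<Longrightarrow> (F has_real_derivative F' t) (at t)"
    "\<And>t. a < t \<Longrightarrow> t < b \<Longrightarrow> F' t \<le> k"
  shows "F b - F a \<le> k * (b - a)"
proof (cases "a = b")
  case True then show ?thesis by simp
next
  case False
  then have ab: "a < b" using assms(1) by simp
  have "\<exists>l z. a < z \<and> z < b \<and> DERIV F z :> l \<and> F b - F a = (b - a) * l"
    apply (rule MVT[OF ab assms(2)])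
    using assms(3) real_differentiable_def by blast
  then obtain l z where z: "a < z" "z < b" "DERIV F z :> l" "F b - F a = (b - a) * l" by blast
  have "l = F' z" using DERIV_unique[OF z(3) assms(3)[OF z(1,2)]] .
  then have "l \<le> k" using assms(4)[OF z(1,2)] by simp
  then show ?thesis using z(4) ab by (simp add: mult.commute mult_left_mono)
qed

lemma quad_neg:
  fixes A B C s r :: real
  assumes "A > 0" "C > 0" "A * C > B^2"
  shows "- A * s^2 + 2 * B * s * r - C * r^2 \<le> - ((A * C - B^2) / (A + C)) * (s^2 + r^2)"
proof -
  define e where "e = (A * C - B^2) / (A + C)"
  have Ae: "A - e > 0" unfolding e_def using assms
    by (simp add: field_simps) (simp add: add_pos_nonneg)
  have ACe: "(A - e) * (C - e) \<ge> B^2"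
  proof -
    have "(A - e) * (C - e) = A * C - e * (A + C) + e^2" by (simp add: algebra_simps power2_eq_square)
    also have "e * (A + C) = A * C - B^2" unfolding e_def using assms by simp
    finally show ?thesis by simp
  qed
  have "(A - e) * ((A - e) * s^2 - 2 * B * s * r + (C - e) * r^2) = ((A - e) * s - B * r)^2 + ((A - e) * (C - e) - B^2) * r^2"
    by (simp add: algebra_simps power2_eq_square)
  also have "\<dots> \<ge> 0" using ACe by simp
  finally have "(A - e) * s^2 - 2 * B * s * r + (C - e) * r^2 \<ge> 0"
    using Ae zero_le_mult_iff by (smt (verit))
  then show ?thesis unfolding e_def[symmetric] by (simp add: algebra_simps)
qed

lemma param_choice:
  fixes L b kp ki :: real
  assumes "L > 0" "b > 0" "kp > 0" "ki > 0" "kp^2 * b > kp * L + ki + L^2 / (4 * b)"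
  defines "h \<equiv> ki * (2 * b * kp - L) / (4 * b * ki + L^2)"
  shows "h > 0" "kp - h > 0" "4 * h * b * (kp - h) * ki > (h * L + ki)^2"
proof -
  define D where "D = 4 * b * ki + L^2"
  have D: "D > 0" unfolding D_def using assms by (simp add: add_pos_pos)
  have hD: "h * D = ki * (2 * b * kp - L)" unfolding h_def D_def[symmetric] using D by simp
  have "L^2 / (4 * b) > 0" using assms by simp
  then have P: "b * kp^2 - kp * L - ki > 0" using assms(5) by (simp add: algebra_simps)
  have "b * kp > L"
  proof (rule ccontr)
    assume "\<not> b * kp > L"
    then have "b * kp * kp \<le> L * kp" using assms(3) by (simp add: mult_right_mono)
    moreover have "b * kp^2 = b * kp * kp" by (simp add: power2_eq_square)
    ultimately show False using P assms(4) mult.commute[of L kp] by linarith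
  qed
  then have "h * D > 0" unfolding hD using assms by simp
  then show "h > 0" using D by (simp add: zero_less_mult_iff)
  have "ki * (2 * b * kp - L) < kp * D"
  proof -
    have "0 < b * kp * ki" "0 < L * ki" "0 \<le> kp * L^2" using assms by auto
    then show ?thesis unfolding D_def by (simp add: algebra_simps)
  qed
  then have "h * D < kp * D" using hD by simp
  then show "kp - h > 0" using D by simp
  define Q where "Q = 4 * h * b * (kp - h) * ki - (h * L + ki)^2"
  have "D * Q = 2 * (h * D) * ki * (2 * b * kp - L) - (h * D)^2 - ki^2 * D"
    unfolding Q_def D_def by (simp add: algebra_simps power2_eq_square)
  also have "\<dots> = 2 * (ki * (2 * b * kp - L)) * ki * (2 * b * kp - L) - (ki * (2 * b * kp - L))^2 - ki^2 * D"
    by (simp only: hD)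
  also have "\<dots> = 4 * b * ki^2 * (b * kp^2 - kp * L - ki)"
    unfolding D_def by (simp add: algebra_simps power2_eq_square)
  finally have "D * Q > 0" using P assms by simp
  then have "Q > 0" using D by (simp add: zero_less_mult_iff)
  then show "4 * h * b * (kp - h) * ki > (h * L + ki)^2" unfolding Q_def by simp
qed

lemma decay:
  fixes L b kp ki :: real
  assumes "L > 0" "b > 0" "(kp, ki) \<in> Omega_pi L b"
  shows "\<exists>K \<delta>. \<delta> > 0 \<and> (\<forall>(E::real \<Rightarrow> real^'n) U \<Delta>.
     (\<forall>T. continuous_on {0..T} E \<and> continuous_on {0..T} U) \<and>
     (\<forall>t>0. (E has_vector_derivative - \<Delta> t) (at t)) \<and>
     (\<forall>t>0. (U has_vector_derivative (ki *\<^sub>R E t - kp *\<^sub>R \<Delta> t)) (at t)) \<and>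
     (\<forall>t>0. U t \<bullet> \<Delta> t \<ge> b * (norm (U t))^2 - L * norm (U t) * norm (E t))
     \<longrightarrow> (\<forall>t\<ge>0. (norm (E t))^2 + (norm (U t))^2 \<le> K * ((norm (E 0))^2 + (norm (U 0))^2) * exp (- \<delta> * t)))"
proof -
  have kp: "kp > 0" and ki: "ki > 0" and cond: "kp^2 * b > kp * L + ki + L^2 / (4 * b)"
    using assms(3) unfolding Omega_pi_def by auto
  define h where "h = ki * (2 * b * kp - L) / (4 * b * ki + L^2)"
  have h: "h > 0" "kp - h > 0" "4 * h * b * (kp - h) * ki > (h * L + ki)^2"
    using param_choice[OF assms(1,2) kp ki cond] unfolding h_def by auto
  define g where "g = kp - h"
  define c where "c = g * h"
  have g: "g > 0" using h unfolding g_def by simp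
  have c: "c > 0" unfolding c_def using g h by simp
  define A where "A = h * b"
  define B where "B = (h * L + ki) / 2"
  define C where "C = g * ki"
  have A: "A > 0" unfolding A_def using h assms by simp
  have C: "C > 0" unfolding C_def using g ki by simp
  have ACB: "A * C > B^2"
  proof -
    have "4 * (A * C) = 4 * h * b * (kp - h) * ki" unfolding A_def C_def g_def by (simp add: algebra_simps)
    moreover have "4 * B^2 = (h * L + ki)^2" unfolding B_def by (simp add: power2_eq_square algebra_simps)
    ultimately show ?thesis using h(3) by simp
  qed
  define \<epsilon> where "\<epsilon> = (A * C - B^2) / (A + C)"
  have eps: "\<epsilon> > 0" unfolding \<epsilon>_def using ACB A C by simp
  define K1 where "K1 = 1 + g^2 + c"
  have K1: "K1 > 0" unfolding K1_def using c by (simp add: add_pos_nonneg)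
  define K2 where "K2 = 4 + (4 * g^2 + 2) / c"
  have K2: "K2 > 0" unfolding K2_def using c by (simp add: add_pos_nonneg)
  define \<delta> where "\<delta> = \<epsilon> / K1"
  have dpos: "\<delta> > 0" unfolding \<delta>_def using eps K1 by simp
  have main: "(norm (E t))^2 + (norm (U t))^2 \<le> K2 * K1 * ((norm (E 0))^2 + (norm (U 0))^2) * exp (- \<delta> * t)"
    if hyp: "(\<forall>T. continuous_on {0..T} E \<and> continuous_on {0..T} U) \<and>
     (\<forall>t>0. (E has_vector_derivative - \<Delta> t) (at t)) \<and>
     (\<forall>t>0. (U has_vector_derivative (ki *\<^sub>R E t - kp *\<^sub>R \<Delta> t)) (at t)) \<and>
     (\<forall>t>0. U t \<bullet> \<Delta> t \<ge> b * (norm (U t))^2 - L * norm (U t) * norm (E t))"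
      and t: "0 \<le> t" for E U :: "real \<Rightarrow> real^'n" and \<Delta> :: "real \<Rightarrow> real^'n" and t :: real
  proof -
    from hyp have cE: "continuous_on {0..t} E" and cU: "continuous_on {0..t} U"
      and dE: "\<And>t. t > 0 \<Longrightarrow> (E has_vector_derivative - \<Delta> t) (at t)"
      and dU: "\<And>t. t > 0 \<Longrightarrow> (U has_vector_derivative (ki *\<^sub>R E t - kp *\<^sub>R \<Delta> t)) (at t)"
      and mon: "\<And>t. t > 0 \<Longrightarrow> U t \<bullet> \<Delta> t \<ge> b * (norm (U t))^2 - L * norm (U t) * norm (E t)"
      by auto
    define W where "W = (\<lambda>t. (1/2) * ((U t - g *\<^sub>R E t) \<bullet> (U t - g *\<^sub>R E t)) + (c/2) * (E t \<bullet> E t))"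
    define Wd where "Wd = (\<lambda>t. - h * (U t \<bullet> \<Delta> t) + ki * (U t \<bullet> E t) - g * ki * (E t \<bullet> E t))"
    have Wbounds: "W s \<le> K1 * ((norm (E s))^2 + (norm (U s))^2) \<and>
                   (norm (E s))^2 + (norm (U s))^2 \<le> K2 * W s" for s
    proof -
      define p where "p = U s \<bullet> U s"
      define q where "q = E s \<bullet> E s"
      define r where "r = U s \<bullet> E s"
      have Wpqr: "W s = (1/2) * (p - 2 * g * r + g^2 * q) + (c/2) * q"
        unfolding W_def p_def q_def r_def
        by (simp add: inner_diff_left inner_diff_right inner_commute power2_eq_square algebra_simps)
      have n1: "p + 2 * g * r + g^2 * q \<ge> 0"
      proof -
        have "0 \<le> (U s + g *\<^sub>R E s) \<bullet> (U s + g *\<^sub>R E s)" by simp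
        then show ?thesis unfolding p_def q_def r_def
          by (simp add: inner_add_left inner_add_right inner_commute power2_eq_square algebra_simps)
      qed
      have n2: "p - 2 * g * r + g^2 * q \<ge> 0"
      proof -
        have "0 \<le> (U s - g *\<^sub>R E s) \<bullet> (U s - g *\<^sub>R E s)" by simp
        then show ?thesis unfolding p_def q_def r_def
          by (simp add: inner_diff_left inner_diff_right inner_commute power2_eq_square algebra_simps)
      qed
      have n3: "p - 4 * g * r + 4 * g^2 * q \<ge> 0"
      proof -
        have "0 \<le> (U s - (2*g) *\<^sub>R E s) \<bullet> (U s - (2*g) *\<^sub>R E s)" by simp
        then show ?thesis unfolding p_def q_def r_def
          by (simp add: inner_diff_left inner_diff_right inner_commute power2_eq_square algebra_simps)
      qed
      have q0: "q \<ge> 0" unfolding q_def by simp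
      have p0: "p \<ge> 0" unfolding p_def by simp
      have np: "(norm (E s))^2 + (norm (U s))^2 = q + p" unfolding p_def q_def by (simp add: power2_norm_eq_inner)
      have up: "W s \<le> K1 * (q + p)"
      proof -
        have "W s \<le> p + g^2 * q + (c/2) * q" using Wpqr n1 by (simp add: algebra_simps)
        also have "\<dots> \<le> p + g^2 * q + c * q" using c q0 by simp
        also have "\<dots> \<le> K1 * (q + p)" unfolding K1_def using p0 q0 g c
          by (simp add: algebra_simps add_nonneg_nonneg)
        finally show ?thesis .
      qed
      have cq: "c * q \<le> 2 * W s" using Wpqr n2 by simp
      then have cq': "(2 * g^2 + 1) * q \<le> (2 * g^2 + 1) * (2 * W s / c)"
        using c by (intro mult_left_mono) (simp_all add: field_simps add_nonneg_nonneg)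
      have "q + p \<le> 2 * (p - 2 * g * r + g^2 * q) + (2 * g^2 + 1) * q" using n3 by (simp add: algebra_simps)
      also have "\<dots> \<le> 4 * W s + (2 * g^2 + 1) * (2 * W s / c)"
      proof -
        have "c * q \<ge> 0" using c q0 by simp
        then have "2 * (p - 2 * g * r + g^2 * q) \<le> 4 * W s" using Wpqr by (simp add: algebra_simps)
        then show ?thesis using cq' by linarith
      qed
      also have "\<dots> = K2 * W s" unfolding K2_def using c by (simp add: field_simps)
      finally show ?thesis using up np by simp
    qed
    have dW: "(W has_real_derivative Wd s) (at s)" if s: "s > 0" for s
    proof -
      have dE': "(E has_derivative (\<lambda>d. d *\<^sub>R (- \<Delta> s))) (at s)"
        using dE[OF s] by (simp add: has_vector_derivative_def)
      have dU': "(U has_derivative (\<lambda>d. d *\<^sub>R (ki *\<^sub>R E s - kp *\<^sub>R \<Delta> s))) (at s)"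
        using dU[OF s] by (simp add: has_vector_derivative_def)
      have "(W has_derivative (\<lambda>d. (1/2) * ((U s - g *\<^sub>R E s) \<bullet> (d *\<^sub>R (ki *\<^sub>R E s - kp *\<^sub>R \<Delta> s) - g *\<^sub>R (d *\<^sub>R (- \<Delta> s)))
            + (d *\<^sub>R (ki *\<^sub>R E s - kp *\<^sub>R \<Delta> s) - g *\<^sub>R (d *\<^sub>R (- \<Delta> s))) \<bullet> (U s - g *\<^sub>R E s))
            + (c/2) * (E s \<bullet> (d *\<^sub>R (- \<Delta> s)) + (d *\<^sub>R (- \<Delta> s)) \<bullet> E s))) (at s)"
        unfolding W_def
        by (intro derivative_intros dE' dU')
      moreover have "(\<lambda>d. (1/2) * ((U s - g *\<^sub>R E s) \<bullet> (d *\<^sub>R (ki *\<^sub>R E s - kp *\<^sub>R \<Delta> s) - g *\<^sub>R (d *\<^sub>R (- \<Delta> s)))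
            + (d *\<^sub>R (ki *\<^sub>R E s - kp *\<^sub>R \<Delta> s) - g *\<^sub>R (d *\<^sub>R (- \<Delta> s))) \<bullet> (U s - g *\<^sub>R E s))
            + (c/2) * (E s \<bullet> (d *\<^sub>R (- \<Delta> s)) + (d *\<^sub>R (- \<Delta> s)) \<bullet> E s)) = (*) (Wd s)"
      proof
        fix d
        have kpe: "kp = g + h" unfolding g_def by simp
        show "(1/2) * ((U s - g *\<^sub>R E s) \<bullet> (d *\<^sub>R (ki *\<^sub>R E s - kp *\<^sub>R \<Delta> s) - g *\<^sub>R (d *\<^sub>R (- \<Delta> s)))
            + (d *\<^sub>R (ki *\<^sub>R E s - kp *\<^sub>R \<Delta> s) - g *\<^sub>R (d *\<^sub>R (- \<Delta> s))) \<bullet> (U s - g *\<^sub>R E s))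
            + (c/2) * (E s \<bullet> (d *\<^sub>R (- \<Delta> s)) + (d *\<^sub>R (- \<Delta> s)) \<bullet> E s) = Wd s * d"
          unfolding Wd_def c_def kpe
          by (simp add: inner_diff_left inner_diff_right inner_add_left inner_add_right inner_commute algebra_simps)
      qed
      ultimately show ?thesis by (simp add: has_field_derivative_def)
    qed
    have Wd_le: "Wd s \<le> - \<delta> * W s" if s: "s > 0" for s
    proof -
      define nu where "nu = norm (U s)"
      define ne where "ne = norm (E s)"
      have cs: "U s \<bullet> E s \<le> nu * ne" unfolding nu_def ne_def by (rule norm_cauchy_schwarz)
      have "Wd s \<le> - h * (b * nu^2 - L * nu * ne) + ki * (nu * ne) - g * ki * ne^2"
      proof -
        have "- h * (U s \<bullet> \<Delta> s) \<le> - h * (b * nu^2 - L * nu * ne)"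
          using mon[OF s] h(1) unfolding nu_def ne_def by simp
        moreover have "ki * (U s \<bullet> E s) \<le> ki * (nu * ne)" using cs ki by simp
        moreover have "g * ki * (E s \<bullet> E s) = g * ki * ne^2" unfolding ne_def by (simp add: power2_norm_eq_inner)
        ultimately show ?thesis unfolding Wd_def by linarith
      qed
      also have "\<dots> = - A * nu^2 + 2 * B * nu * ne - C * ne^2"
        unfolding A_def B_def C_def by (simp add: algebra_simps)
      also have "\<dots> \<le> - \<epsilon> * (nu^2 + ne^2)"
        using quad_neg[OF A C ACB, of nu ne] unfolding \<epsilon>_def by simp
      also have "\<dots> \<le> - \<delta> * W s"
      proof -
        have "W s \<le> K1 * (nu^2 + ne^2)" using Wbounds[of s] unfolding nu_def ne_def by (simp add: add.commute)
        then have "\<delta> * W s \<le> \<delta> * (K1 * (nu^2 + ne^2))" using dpos by (simp add: mult_left_mono)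
        also have "\<dots> = \<epsilon> * (nu^2 + ne^2)" unfolding \<delta>_def using K1 by simp
        finally show ?thesis by simp
      qed
      finally show ?thesis .
    qed
    define F where "F = (\<lambda>s. exp (\<delta> * s) * W s)"
    have cW: "continuous_on {0..t} W" unfolding W_def
      by (intro continuous_intros cE cU)
    have "F t - F 0 \<le> 0 * (t - 0)"
    proof (rule deriv_upper[OF t])
      show "continuous_on {0..t} F" unfolding F_def
        by (intro continuous_intros cW)
      fix s assume s: "0 < s" "s < t"
      show "(F has_real_derivative (exp (\<delta> * s) * \<delta> * W s + exp (\<delta> * s) * Wd s)) (at s)"
        unfolding F_def
        by (auto intro!: derivative_eq_intros dW s simp: algebra_simps)
      have "\<delta> * W s + Wd s \<le> 0" using Wd_le[OF s(1)] by simp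
      then have "exp (\<delta> * s) * (\<delta> * W s + Wd s) \<le> 0" by (simp add: mult_nonneg_nonpos)
      then show "exp (\<delta> * s) * \<delta> * W s + exp (\<delta> * s) * Wd s \<le> 0" by (simp add: algebra_simps)
    qed
    then have Ft: "exp (\<delta> * t) * W t \<le> W 0" unfolding F_def by simp
    have Wt: "W t \<le> W 0 * exp (- \<delta> * t)"
    proof -
      have "W t = exp (- \<delta> * t) * (exp (\<delta> * t) * W t)" by (simp add: exp_minus field_simps)
      also have "\<dots> \<le> exp (- \<delta> * t) * W 0" using Ft by (simp add: mult_left_mono)
      finally show ?thesis by (simp add: mult.commute)
    qed
    have "(norm (E t))^2 + (norm (U t))^2 \<le> K2 * W t" using Wbounds by blast
    also have "\<dots> \<le> K2 * (W 0 * exp (- \<delta> * t))" using Wt K2 by (simp add: mult_left_mono)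
    also have "\<dots> \<le> K2 * (K1 * ((norm (E 0))^2 + (norm (U 0))^2) * exp (- \<delta> * t))"
      using Wbounds[of 0] K2 by (intro mult_left_mono mult_right_mono) auto
    finally show "(norm (E t))^2 + (norm (U t))^2 \<le> K2 * K1 * ((norm (E 0))^2 + (norm (U 0))^2) * exp (- \<delta> * t)"
      by (simp add: mult.assoc)
  qed
  show ?thesis
    apply (rule exI[of _ "K2 * K1"])
    apply (rule exI[of _ \<delta>])
    using dpos main by blast
qed

lemma PI_basic:
  fixes f :: "real^'n \<Rightarrow> real^'n \<Rightarrow> real^'n"
  assumes PI: "PI_solution f kp ki y x"
  defines "e \<equiv> \<lambda>t. y - x t"
  defines "Z \<equiv> \<lambda>t. integral {0..t} e"
  defines "u \<equiv> \<lambda>t. kp *\<^sub>R e t + ki *\<^sub>R Z t"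
  shows "\<And>T. continuous_on {0..T} x" "\<And>T. continuous_on {0..T} e" "\<And>T. continuous_on {0..T} Z"
    "\<And>T. continuous_on {0..T} u"
    "\<And>t. t > 0 \<Longrightarrow> (x has_vector_derivative f (x t) (u t)) (at t)"
    "\<And>t. t > 0 \<Longrightarrow> (e has_vector_derivative - f (x t) (u t)) (at t)"
    "\<And>t. t > 0 \<Longrightarrow> (Z has_vector_derivative e t) (at t)"
    "\<And>t. t > 0 \<Longrightarrow> (u has_vector_derivative (ki *\<^sub>R e t - kp *\<^sub>R f (x t) (u t))) (at t)"
proof -
  have dx0: "(x has_vector_derivative f (x t) (u t)) (at t within {0..})" if "t \<ge> 0" for t
    using PI that unfolding PI_solution_def u_def Z_def e_def by blast
  show cx: "continuous_on {0..T} x" for T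
    unfolding continuous_on_eq_continuous_within
    using dx0 has_vector_derivative_continuous continuous_within_subset
    by (metis atLeastAtMost_iff atLeast_iff subsetI)
  show ce: "continuous_on {0..T} e" for T unfolding e_def by (intro continuous_intros cx)
  have dZ0: "(Z has_vector_derivative e t) (at t within {0..T})" if "t \<in> {0..T}" for t T
    unfolding Z_def by (rule integral_has_vector_derivative[OF ce that])
  show cZ: "continuous_on {0..T} Z" for T
    unfolding continuous_on_eq_continuous_within
    using dZ0 has_vector_derivative_continuous by blast
  show "continuous_on {0..T} u" for T unfolding u_def by (intro continuous_intros ce cZ)
  show dx: "(x has_vector_derivative f (x t) (u t)) (at t)" if "t > 0" for t
  proof -
    have "at t within {0..} = at t" using that by (intro at_within_interior) simp
    then show ?thesis using dx0[of t] that by simp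
  qed
  show de: "(e has_vector_derivative - f (x t) (u t)) (at t)" if "t > 0" for t
    unfolding e_def using dx[OF that] by (auto intro!: derivative_eq_intros)
  show dZ: "(Z has_vector_derivative e t) (at t)" if "t > 0" for t
  proof -
    have "at t within {0..t+1} = at t" using that by (intro at_within_interior) simp
    then show ?thesis using dZ0[of t "t+1"] that by simp
  qed
  show "(u has_vector_derivative (ki *\<^sub>R e t - kp *\<^sub>R f (x t) (u t))) (at t)" if "t > 0" for t
    using de[OF that] dZ[OF that] unfolding u_def
    by (auto intro!: derivative_eq_intros simp: algebra_simps)
qed

lemma exp_neg_tendsto: "(\<delta>::real) > 0 \<Longrightarrow> ((\<lambda>t. exp (- \<delta> * t)) \<longlongrightarrow> 0) at_top"
  using filterlim_compose[OF exp_at_bot filterlim_tendsto_neg_mult_at_bot[OF tendsto_const[of "- \<delta>"] _ filterlim_ident]]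
  by simp

lemma part1:
  fixes f :: "real^'n \<Rightarrow> real^'n \<Rightarrow> real^'n"
  assumes L: "L > 0" and b: "b > 0" and Om: "(kp, ki) \<in> Omega_pi L b" and fF: "f \<in> F_class L b"
    and PI: "PI_solution f kp ki y x"
  shows "(x \<longlongrightarrow> y) at_top"
proof -
  have kp: "kp > 0" and ki: "ki > 0" using Om unfolding Omega_pi_def by auto
  define e where "e = (\<lambda>t. y - x t)"
  define Z where "Z = (\<lambda>t. integral {0..t} e)"
  define u where "u = (\<lambda>t. kp *\<^sub>R e t + ki *\<^sub>R Z t)"
  have ce: "\<And>T. continuous_on {0..T} e" and cu: "\<And>T. continuous_on {0..T} u"
    and de: "\<And>t. t > 0 \<Longrightarrow> (e has_vector_derivative - f (x t) (u t)) (at t)"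
    and du: "\<And>t. t > 0 \<Longrightarrow> (u has_vector_derivative (ki *\<^sub>R e t - kp *\<^sub>R f (x t) (u t))) (at t)"
    using PI_basic[OF PI] unfolding e_def Z_def u_def by auto
  note P = F_class_props[OF fF]
  obtain K \<delta> where dpos: "\<delta> > 0" and dec: "\<forall>(E::real \<Rightarrow> real^'n) U \<Delta>.
     (\<forall>T. continuous_on {0..T} E \<and> continuous_on {0..T} U) \<and>
     (\<forall>t>0. (E has_vector_derivative - \<Delta> t) (at t)) \<and>
     (\<forall>t>0. (U has_vector_derivative (ki *\<^sub>R E t - kp *\<^sub>R \<Delta> t)) (at t)) \<and>
     (\<forall>t>0. U t \<bullet> \<Delta> t \<ge> b * (norm (U t))^2 - L * norm (U t) * norm (E t))
     \<longrightarrow> (\<forall>t\<ge>0. (norm (E t))^2 + (norm (U t))^2 \<le> K * ((norm (E 0))^2 + (norm (U 0))^2) * exp (- \<delta> * t))"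
    using decay[OF L b Om] by blast
  obtain M1 where M1: "\<And>s. s \<in> {0..2} \<Longrightarrow> norm (e s) \<le> M1"
    using continuous_on_compact_bound[OF compact_Icc ce[of 2]] by blast
  obtain M2 where M2: "\<And>s. s \<in> {0..2} \<Longrightarrow> norm (u s) \<le> M2"
    using continuous_on_compact_bound[OF compact_Icc cu[of 2]] by blast
  define M where "M = max M1 M2"
  define K' where "K' = max K 0"
  define \<rho> where "\<rho> = (\<lambda>t. sqrt (K' * (8 * M^2) * exp (- \<delta> * t)))"
  have shift: "norm (e t - e (t + \<tau>)) \<le> \<rho> t \<and> norm (u t - u (t + \<tau>)) \<le> \<rho> t"
    if t: "t \<ge> 0" and \<tau>: "0 \<le> \<tau>" "\<tau> \<le> 1" for t \<tau>
  proof -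
    define E where "E = (\<lambda>t. e t - e (t + \<tau>))"
    define U where "U = (\<lambda>t. u t - u (t + \<tau>))"
    define \<Delta> where "\<Delta> = (\<lambda>t. f (x t) (u t) - f (x (t + \<tau>)) (u (t + \<tau>)))"
    have cshift: "continuous_on {0..T} (\<lambda>t. g (t + \<tau>))" if cg: "\<And>T. continuous_on {0..T} g" for g :: "real \<Rightarrow> real^'n" and T
      by (rule continuous_on_compose2[OF cg[of "T + \<tau>"]]) (auto intro!: continuous_intros simp: \<tau>)
    have dshift: "((\<lambda>t. g (t + \<tau>)) has_vector_derivative g') (at t)"
      if "(g has_vector_derivative g') (at (t + \<tau>))" for g :: "real \<Rightarrow> real^'n" and g' t
    proof -
      have "((\<lambda>t. t + \<tau>) has_vector_derivative 1) (at t)" by (auto intro!: derivative_eq_intros)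
      from vector_diff_chain_at[OF this that] show ?thesis by (simp add: o_def)
    qed
    have H1: "\<forall>T. continuous_on {0..T} E \<and> continuous_on {0..T} U"
      unfolding E_def U_def using ce cu cshift[OF ce] cshift[OF cu] by (auto intro!: continuous_intros)
    have H2: "\<forall>t>0. (E has_vector_derivative - \<Delta> t) (at t)"
    proof (intro allI impI)
      fix t :: real assume "t > 0"
      then have "t + \<tau> > 0" using \<tau> by simp
      show "(E has_vector_derivative - \<Delta> t) (at t)"
        unfolding E_def \<Delta>_def
        using de[OF \<open>t > 0\<close>] dshift[OF de[OF \<open>t + \<tau> > 0\<close>]]
        by (auto intro!: derivative_eq_intros simp: algebra_simps)
    qed
    have H3: "\<forall>t>0. (U has_vector_derivative (ki *\<^sub>R E t - kp *\<^sub>R \<Delta> t)) (at t)"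
    proof (intro allI impI)
      fix t :: real assume "t > 0"
      then have "t + \<tau> > 0" using \<tau> by simp
      show "(U has_vector_derivative (ki *\<^sub>R E t - kp *\<^sub>R \<Delta> t)) (at t)"
        unfolding U_def E_def \<Delta>_def
        using du[OF \<open>t > 0\<close>] dshift[OF du[OF \<open>t + \<tau> > 0\<close>]]
        by (auto intro!: derivative_eq_intros simp: algebra_simps)
    qed
    have H4: "\<forall>t>0. U t \<bullet> \<Delta> t \<ge> b * (norm (U t))^2 - L * norm (U t) * norm (E t)"
    proof (intro allI impI)
      fix t :: real assume "t > 0"
      define x1 where "x1 = x t"
      define x2 where "x2 = x (t + \<tau>)"
      define u1 where "u1 = u t"
      define u2 where "u2 = u (t + \<tau>)"
      have Ux: "U t = u1 - u2" unfolding U_def u1_def u2_def by simp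
      have Ex: "norm (E t) = norm (x1 - x2)" unfolding E_def e_def x1_def x2_def
        by (simp add: norm_minus_commute)
      have Dx: "\<Delta> t = (f x1 u1 - f x1 u2) + (f x1 u2 - f x2 u2)"
        unfolding \<Delta>_def x1_def x2_def u1_def u2_def by simp
      have m1: "(u1 - u2) \<bullet> (f x1 u1 - f x1 u2) \<ge> b * (norm (u1 - u2))^2" using P(2) by blast
      have "\<bar>(u1 - u2) \<bullet> (f x1 u2 - f x2 u2)\<bar> \<le> norm (u1 - u2) * norm (f x1 u2 - f x2 u2)"
        by (rule Cauchy_Schwarz_ineq2)
      also have "\<dots> \<le> norm (u1 - u2) * (L * norm (x1 - x2))"
        using P(3) by (simp add: mult_left_mono)
      finally have m2: "(u1 - u2) \<bullet> (f x1 u2 - f x2 u2) \<ge> - (L * norm (u1 - u2) * norm (x1 - x2))"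
        by (simp add: mult_ac)
      show "U t \<bullet> \<Delta> t \<ge> b * (norm (U t))^2 - L * norm (U t) * norm (E t)"
        unfolding Ux Dx Ex inner_add_right using m1 m2 by linarith
    qed
    have bound: "(norm (E t))^2 + (norm (U t))^2 \<le> K * ((norm (E 0))^2 + (norm (U 0))^2) * exp (- \<delta> * t)"
      using dec H1 H2 H3 H4 t by blast
    have S0: "(norm (E 0))^2 + (norm (U 0))^2 \<le> 8 * M^2"
    proof -
      have "norm (E 0) \<le> 2 * M"
      proof -
        have "norm (E 0) \<le> norm (e 0) + norm (e \<tau>)" unfolding E_def by (simp add: norm_triangle_ineq4)
        also have "\<dots> \<le> M + M" using M1[of 0] M1[of \<tau>] \<tau> unfolding M_def by auto
        finally show ?thesis by simp
      qed
      moreover have "norm (U 0) \<le> 2 * M"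
      proof -
        have "norm (U 0) \<le> norm (u 0) + norm (u \<tau>)" unfolding U_def by (simp add: norm_triangle_ineq4)
        also have "\<dots> \<le> M + M" using M2[of 0] M2[of \<tau>] \<tau> unfolding M_def by auto
        finally show ?thesis by simp
      qed
      ultimately have "(norm (E 0))^2 \<le> (2 * M)^2" "(norm (U 0))^2 \<le> (2 * M)^2"
        using power_mono[OF _ norm_ge_zero, of "E 0" "2 * M" 2] power_mono[OF _ norm_ge_zero, of "U 0" "2 * M" 2]
        by auto
      then show ?thesis by (simp add: power2_eq_square)
    qed
    have "K * ((norm (E 0))^2 + (norm (U 0))^2) * exp (- \<delta> * t) \<le> K' * (8 * M^2) * exp (- \<delta> * t)"
    proof -
      have "K * ((norm (E 0))^2 + (norm (U 0))^2) \<le> K' * ((norm (E 0))^2 + (norm (U 0))^2)"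
        unfolding K'_def by (intro mult_right_mono) auto
      also have "\<dots> \<le> K' * (8 * M^2)" using S0 unfolding K'_def by (intro mult_left_mono) auto
      finally show ?thesis by (simp add: mult_right_mono)
    qed
    with bound have all: "(norm (E t))^2 + (norm (U t))^2 \<le> K' * (8 * M^2) * exp (- \<delta> * t)" by linarith
    have "norm (E t) \<le> \<rho> t" unfolding \<rho>_def
      by (rule real_le_rsqrt) (use all in \<open>smt (verit) zero_le_power2\<close>)
    moreover have "norm (U t) \<le> \<rho> t" unfolding \<rho>_def
      by (rule real_le_rsqrt) (use all in \<open>smt (verit) zero_le_power2\<close>)
    ultimately show ?thesis unfolding E_def U_def by simp
  qed
  have ebound: "norm (e t) \<le> ((1 + kp) / ki + 1) * \<rho> t" if t: "t \<ge> 0" for t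
  proof -
    have int: "e integrable_on {0..t+1}" by (rule integrable_continuous_interval[OF ce])
    have I1: "Z (t+1) - Z t = integral {t..t+1} e"
      unfolding Z_def using Henstock_Kurzweil_Integration.integral_combine[OF t _ int]
      by (simp add: algebra_simps eq_diff_eq)
    have int2: "e integrable_on {t..t+1}"
      by (rule integrable_continuous_interval[OF continuous_on_subset[OF ce[of "t+1"]]]) (use t in auto)
    have I2: "integral {t..t+1} e = e t + integral {t..t+1} (\<lambda>s. e s - e t)"
      using Henstock_Kurzweil_Integration.integral_diff[OF int2 integrable_const_ivl] by simp
    have I3: "norm (integral {t..t+1} (\<lambda>s. e s - e t)) \<le> \<rho> t * ((t+1) - t)"
    proof (rule integral_bound)
      show "continuous_on {t..t + 1} (\<lambda>s. e s - e t)"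
        by (intro continuous_intros continuous_on_subset[OF ce[of "t+1"]]) (use t in auto)
      fix s assume s: "s \<in> {t..t+1}"
      have "norm (e s - e t) = norm (e t - e (t + (s - t)))" by (simp add: norm_minus_commute)
      also have "\<dots> \<le> \<rho> t" using shift[of t "s - t"] t s by auto
      finally show "norm (e s - e t) \<le> \<rho> t" .
    qed simp
    have I4: "ki *\<^sub>R (Z (t+1) - Z t) = (u (t+1) - u t) - kp *\<^sub>R (e (t+1) - e t)"
      unfolding u_def by (simp add: algebra_simps)
    have "ki * norm (Z (t+1) - Z t) = norm ((u (t+1) - u t) - kp *\<^sub>R (e (t+1) - e t))"
      using I4 ki by (metis norm_scaleR abs_of_pos)
    also have "\<dots> \<le> norm (u (t+1) - u t) + kp * norm (e (t+1) - e t)"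
      using kp by (metis abs_of_pos norm_scaleR norm_triangle_ineq4)
    also have "\<dots> \<le> \<rho> t + kp * \<rho> t"
      using shift[OF t, of 1] kp by (simp add: norm_minus_commute mult_left_mono add_mono)
    finally have Zb: "ki * norm (Z (t+1) - Z t) \<le> (1 + kp) * \<rho> t" by (simp add: algebra_simps)
    then have Zb': "norm (Z (t+1) - Z t) \<le> (1 + kp) / ki * \<rho> t" using ki by (simp add: field_simps)
    have "e t = (Z (t+1) - Z t) - integral {t..t+1} (\<lambda>s. e s - e t)" using I1 I2 by simp
    then have "norm (e t) \<le> norm (Z (t+1) - Z t) + norm (integral {t..t+1} (\<lambda>s. e s - e t))"
      by (metis norm_triangle_ineq4)
    also have "\<dots> \<le> (1 + kp) / ki * \<rho> t + \<rho> t" using Zb' I3 by simp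
    finally show ?thesis by (simp add: algebra_simps)
  qed
  have rho0: "((\<lambda>t. ((1 + kp) / ki + 1) * \<rho> t) \<longlongrightarrow> 0) at_top"
  proof -
    have "((\<lambda>t. K' * (8 * M^2) * exp (- \<delta> * t)) \<longlongrightarrow> K' * (8 * M^2) * 0) at_top"
      by (intro tendsto_intros exp_neg_tendsto dpos)
    then have "(\<rho> \<longlongrightarrow> sqrt 0) at_top" unfolding \<rho>_def by (intro tendsto_intros) simp
    then show ?thesis by (auto intro: tendsto_eq_intros)
  qed
  have "(e \<longlongrightarrow> 0) at_top"
    by (rule Lim_null_comparison[OF _ rho0]) (use ebound in \<open>auto simp: eventually_at_top_linorder\<close>)
  then have "((\<lambda>t. y - e t) \<longlongrightarrow> y - 0) at_top" by (intro tendsto_intros)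
  then show ?thesis unfolding e_def by simp
qed

lemma linear_in_F:
  fixes a B :: real and d :: "real^'n"
  assumes "\<bar>a\<bar> \<le> L" "B \<ge> b"
  shows "(\<lambda>x u. a *\<^sub>R x + B *\<^sub>R u + d) \<in> F_class L b"
proof -
  define f where "f = (\<lambda>(x::real^'n) (u::real^'n). a *\<^sub>R x + B *\<^sub>R u + d)"
  define l where "l = (\<lambda>q::(real^'n) \<times> (real^'n). a *\<^sub>R fst q + B *\<^sub>R snd q)"
  have bl: "bounded_linear l" unfolding l_def
    by (intro bounded_linear_add bounded_linear_compose[OF bounded_linear_scaleR_right bounded_linear_fst] bounded_linear_compose[OF bounded_linear_scaleR_right bounded_linear_snd])
  have D: "(uncurried f has_derivative l) (at p)" for p
    unfolding f_def uncurried_def l_def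
    by (auto intro!: derivative_eq_intros simp: case_prod_beta)
  have fd: "frechet_derivative (uncurried f) (at p) = l" for p
    using frechet_derivative_at[OF D] by simp
  have C1: "C1_map (uncurried f)" unfolding C1_map_def
    apply (rule exI[of _ "\<lambda>p. Blinfun l"])
    using D bounded_linear_Blinfun_apply[OF bl] by simp
  have blx: "bounded_linear (\<lambda>v::real^'n. a *\<^sub>R v)" by (rule bounded_linear_scaleR_right)
  have blu: "bounded_linear (\<lambda>v::real^'n. B *\<^sub>R v)" by (rule bounded_linear_scaleR_right)
  have jx: "jac_x f x u = matrix (\<lambda>v. a *\<^sub>R v)" for x u
    unfolding jac_x_def fd l_def by simp
  have ju: "jac_u f x u = matrix (\<lambda>v. B *\<^sub>R v)" for x u
    unfolding jac_u_def fd l_def by simp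
  have opn: "op_norm (jac_x f x u) \<le> L" for x u
  proof -
    have "op_norm (jac_x f x u) = onorm (\<lambda>v::real^'n. a *\<^sub>R v)"
      unfolding jx op_norm_def using matrix_vector_mul(3)[OF blx] by simp
    also have "\<dots> = \<bar>a\<bar> * onorm (\<lambda>v::real^'n. v)"
      using onorm_scaleR[OF bounded_linear_ident, of a] by simp
    also have "\<dots> \<le> \<bar>a\<bar> * 1" by (intro mult_left_mono onorm_id_le) simp
    finally show ?thesis using assms(1) by simp
  qed
  have lw: "loewner_ge (Sym (jac_u f x u)) (b *\<^sub>R mat 1)" for x u
  proof -
    let ?J = "matrix (\<lambda>v::real^'n. B *\<^sub>R v)"
    have Jv: "?J *v v = B *\<^sub>R v" for v using fun_cong[OF matrix_vector_mul(3)[OF blu], of v] by simp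
    have "0 \<le> v \<bullet> ((Sym ?J - b *\<^sub>R mat 1) *v v)" for v
    proof -
      have "v \<bullet> ((Sym ?J - b *\<^sub>R mat 1) *v v) = v \<bullet> (?J *v v) - b * (v \<bullet> v)"
        unfolding Sym_def
        by (simp add: matrix_vector_mult_diff_rdistrib matrix_vector_mult_add_rdistrib inner_diff_right inner_add_right
           inner_transpose_same inner_vmult_same scaleR_mv inner_commute del: matrix_vector_mul)
      also have "\<dots> = (B - b) * (v \<bullet> v)" unfolding Jv by (simp add: algebra_simps)
      finally show ?thesis using assms(2) by simp
    qed
    then show ?thesis unfolding loewner_ge_def psd_def ju by blast
  qed
  show ?thesis using C1 opn lw unfolding F_class_def f_def by blast
qed

lemma PI_check:
  fixes f :: "real^'n \<Rightarrow> real^'n \<Rightarrow> real^'n" and v :: "real^'n"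
  assumes dX: "\<And>t. (X has_real_derivative X' t) (at t)"
    and dG: "\<And>t. (G has_real_derivative X t) (at t)" and G0: "G 0 = 0"
    and eq: "\<And>t. t \<ge> 0 \<Longrightarrow> f (X t *\<^sub>R v) (kp *\<^sub>R (- (X t *\<^sub>R v)) + ki *\<^sub>R (- (G t *\<^sub>R v))) = X' t *\<^sub>R v"
  shows "PI_solution f kp ki 0 (\<lambda>t. X t *\<^sub>R v)"
  unfolding PI_solution_def
proof (intro allI impI)
  fix t :: real assume t: "t \<ge> 0"
  have "((\<lambda>s. 0 - X s *\<^sub>R v) has_integral (- (G t *\<^sub>R v) - - (G 0 *\<^sub>R v))) {0..t}"
  proof (rule fundamental_theorem_of_calculus[OF t])
    fix s assume "s \<in> {0..t}"
    show "((\<lambda>s. - (G s *\<^sub>R v)) has_vector_derivative (0 - X s *\<^sub>R v)) (at s within {0..t})"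
      using has_field_derivative_at_within[OF dG[of s]] by (auto intro!: derivative_eq_intros simp: has_real_derivative_iff_has_vector_derivative[symmetric])
  qed
  then have "((\<lambda>s. 0 - X s *\<^sub>R v) has_integral (- (G t *\<^sub>R v))) {0..t}"
    using G0 by simp
  then have I: "integral {0..t} (\<lambda>s. 0 - X s *\<^sub>R v) = - (G t *\<^sub>R v)"
    by (rule integral_unique)
  have "((\<lambda>t. X t *\<^sub>R v) has_vector_derivative X' t *\<^sub>R v) (at t within {0..})"
    using has_field_derivative_at_within[OF dX[of t]] by (auto intro!: derivative_eq_intros
        simp: has_real_derivative_iff_has_vector_derivative)
  then show "((\<lambda>t. X t *\<^sub>R v) has_vector_derivative
          f (X t *\<^sub>R v) (kp *\<^sub>R (0 - X t *\<^sub>R v) + ki *\<^sub>R integral {0..t} (\<lambda>s. 0 - X s *\<^sub>R v))) (at t within {0..})"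
    unfolding I using eq[OF t] by simp
qed

lemma not_tendsto0:
  fixes x :: "real \<Rightarrow> 'a::real_normed_vector"
  assumes "(x \<longlongrightarrow> 0) at_top" "c > 0" "\<And>N. \<exists>t\<ge>N. norm (x t) \<ge> c"
  shows False
proof -
  have "((\<lambda>t. norm (x t)) \<longlongrightarrow> 0) at_top" using tendsto_norm_zero[OF assms(1)] .
  then have "eventually (\<lambda>t. norm (x t) < c) at_top" using assms(2) by (rule order_tendstoD)
  then obtain N where "\<And>t. t \<ge> N \<Longrightarrow> norm (x t) < c" by (auto simp: eventually_at_top_linorder)
  with assms(3)[of N] show False by force
qed

lemma quad_root:
  fixes B kp ki :: real
  assumes "B * B * kp * kp - 4 * B * ki \<ge> 0"
  defines "lam \<equiv> (- B * kp + sqrt (B * B * kp * kp - 4 * B * ki)) / 2"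
  shows "lam * lam + B * kp * lam + B * ki = 0"
proof -
  define s where "s = sqrt (B * B * kp * kp - 4 * B * ki)"
  have s2: "s * s = B * B * kp * kp - 4 * B * ki" unfolding s_def using assms(1) by simp
  have "lam * lam + B * kp * lam + B * ki = (s * s - (B * B * kp * kp - 4 * B * ki)) / 4"
    unfolding lam_def s_def[symmetric] by (simp add: field_simps)
  then show ?thesis using s2 by simp
qed

lemma exp_counter:
  fixes B lam kp ki :: real
  assumes "B \<ge> b" "L > 0" "lam > 0" "lam * lam + B * kp * lam + B * ki = 0"
  shows "\<exists>(f::real^1 \<Rightarrow> real^1 \<Rightarrow> real^1) \<in> F_class L b. \<exists>y x. PI_solution f kp ki y x \<and> \<not> (x \<longlongrightarrow> y) at_top"
proof -
  define v where "v = (1::real^1)"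
  have v: "norm v > 0" unfolding v_def by simp
  define f where "f = (\<lambda>(x::real^1) (u::real^1). 0 *\<^sub>R x + B *\<^sub>R u + (- (B * ki / lam)) *\<^sub>R v)"
  have fF: "f \<in> F_class L b" unfolding f_def by (rule linear_in_F) (use assms in auto)
  have PI: "PI_solution f kp ki 0 (\<lambda>t. exp (lam * t) *\<^sub>R v)"
  proof (rule PI_check[where X' = "\<lambda>t. lam * exp (lam * t)" and G = "\<lambda>t. (exp (lam * t) - 1) / lam"])
    show "((\<lambda>t. exp (lam * t)) has_real_derivative lam * exp (lam * t)) (at t)" for t
      by (auto intro!: derivative_eq_intros)
    show "((\<lambda>t. (exp (lam * t) - 1) / lam) has_real_derivative exp (lam * t)) (at t)" for t
      using assms(3) by (auto intro!: derivative_eq_intros)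
    show "(exp (lam * 0) - 1) / lam = 0" by simp
    fix t :: real
    define E where "E = exp (lam * t)"
    have e1: "B * (kp * (- E) + ki * (- ((E - 1) / lam))) - B * ki / lam = - E * (B * kp * lam + B * ki) / lam"
      using assms(3) by (simp add: field_simps)
    have e2: "B * kp * lam + B * ki = - (lam * lam)" using assms(4) by linarith
    have e3: "B * (kp * (- E) + ki * (- ((E - 1) / lam))) - B * ki / lam = lam * E"
      unfolding e1 e2 using assms(3) by simp
    have "f (E *\<^sub>R v) (kp *\<^sub>R - (E *\<^sub>R v) + ki *\<^sub>R - (((E - 1) / lam) *\<^sub>R v))
       = (lam * E) *\<^sub>R v"
      unfolding f_def e3[symmetric] by (simp add: vec_eq_iff algebra_simps)
    then show "f (exp (lam * t) *\<^sub>R v) (kp *\<^sub>R - (exp (lam * t) *\<^sub>R v) + ki *\<^sub>R - (((exp (lam * t) - 1) / lam) *\<^sub>R v)) =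
        (lam * exp (lam * t)) *\<^sub>R v"
      unfolding E_def .
  qed
  have "\<not> ((\<lambda>t. exp (lam * t) *\<^sub>R v) \<longlongrightarrow> 0) at_top"
  proof
    assume "((\<lambda>t. exp (lam * t) *\<^sub>R v) \<longlongrightarrow> 0) at_top"
    then show False
    proof (rule not_tendsto0[OF _ v])
      fix N :: real
      have "norm (exp (lam * max N 0) *\<^sub>R v) \<ge> norm v"
        using assms(3) v by (simp add: mult_le_cancel_right1)
      then show "\<exists>t\<ge>N. norm v \<le> norm (exp (lam * t) *\<^sub>R v)" by (intro exI[of _ "max N 0"]) auto
    qed
  qed
  with fF PI show ?thesis by blast
qed

lemma const_counter:
  fixes kp :: real
  assumes "b > 0" "L > 0"
  shows "\<exists>(f::real^1 \<Rightarrow> real^1 \<Rightarrow> real^1) \<in> F_class L b. \<exists>y x. PI_solution f kp 0 y x \<and> \<not> (x \<longlongrightarrow> y) at_top"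
proof -
  define v where "v = (1::real^1)"
  have v: "norm v > 0" unfolding v_def by simp
  define f where "f = (\<lambda>(x::real^1) (u::real^1). 0 *\<^sub>R x + b *\<^sub>R u + (b * kp) *\<^sub>R v)"
  have fF: "f \<in> F_class L b" unfolding f_def by (rule linear_in_F) (use assms in auto)
  have PI: "PI_solution f kp 0 0 (\<lambda>t::real. 1 *\<^sub>R v)"
  proof (rule PI_check[where X' = "\<lambda>t. 0" and G = "\<lambda>t. t"])
    show "((\<lambda>t. 1) has_real_derivative 0) (at t)" for t by (auto intro!: derivative_eq_intros)
    show "((\<lambda>t. t) has_real_derivative 1) (at t)" for t by (auto intro!: derivative_eq_intros)
    show "(0::real) = 0" by simp
    fix t :: real
    show "f (1 *\<^sub>R v) (kp *\<^sub>R - (1 *\<^sub>R v) + 0 *\<^sub>R - (t *\<^sub>R v)) = 0 *\<^sub>R v"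
      unfolding f_def by (simp add: vec_eq_iff algebra_simps)
  qed
  have "\<not> ((\<lambda>t::real. 1 *\<^sub>R v) \<longlongrightarrow> 0) at_top"
  proof
    assume "((\<lambda>t::real. 1 *\<^sub>R v) \<longlongrightarrow> 0) at_top"
    then show False
    proof (rule not_tendsto0[of "\<lambda>t. 1 *\<^sub>R v" "norm v"])
      show "norm v > 0" by (rule v)
      fix N :: real show "\<exists>t\<ge>N. norm v \<le> norm (1 *\<^sub>R v)" by (intro exI[of _ N]) simp
    qed
  qed
  with fF PI show ?thesis by blast
qed

lemma osc_counter:
  fixes kp ki :: real
  assumes "b > 0" "L > 0" "ki > 0" "kp \<ge> 0" "b * kp \<le> L"
  shows "\<exists>(f::real^1 \<Rightarrow> real^1 \<Rightarrow> real^1) \<in> F_class L b. \<exists>y x. PI_solution f kp ki y x \<and> \<not> (x \<longlongrightarrow> y) at_top"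
proof -
  define v where "v = (1::real^1)"
  have v: "norm v > 0" unfolding v_def by simp
  define w where "w = sqrt (b * ki)"
  have w: "w > 0" unfolding w_def using assms by simp
  have w2: "w * w = b * ki" unfolding w_def using assms by simp
  define f where "f = (\<lambda>(x::real^1) (u::real^1). (b * kp) *\<^sub>R x + b *\<^sub>R u + 0)"
  have fF: "f \<in> F_class L b" unfolding f_def by (rule linear_in_F) (use assms in auto)
  have PI: "PI_solution f kp ki 0 (\<lambda>t. cos (w * t) *\<^sub>R v)"
  proof (rule PI_check[where X' = "\<lambda>t. - w * sin (w * t)" and G = "\<lambda>t. sin (w * t) / w"])
    show "((\<lambda>t. cos (w * t)) has_real_derivative - w * sin (w * t)) (at t)" for t
      by (auto intro!: derivative_eq_intros)
    show "((\<lambda>t. sin (w * t) / w) has_real_derivative cos (w * t)) (at t)" for t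
      using w by (auto intro!: derivative_eq_intros)
    show "sin (w * 0) / w = 0" by simp
    fix t :: real
    have e3: "b * kp * cos (w * t) + b * (kp * (- cos (w * t)) + ki * (- (sin (w * t) / w))) = - w * sin (w * t)"
    proof -
      have "b * kp * cos (w * t) + b * (kp * (- cos (w * t)) + ki * (- (sin (w * t) / w))) = - (w * w) * sin (w * t) / w"
        unfolding w2 by (simp add: algebra_simps)
      also have "\<dots> = - w * sin (w * t)" using w by simp
      finally show ?thesis .
    qed
    show "f (cos (w * t) *\<^sub>R v) (kp *\<^sub>R - (cos (w * t) *\<^sub>R v) + ki *\<^sub>R - ((sin (w * t) / w) *\<^sub>R v)) = (- w * sin (w * t)) *\<^sub>R v"
      unfolding f_def e3[symmetric] by (simp add: vec_eq_iff algebra_simps)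
  qed
  have "\<not> ((\<lambda>t. cos (w * t) *\<^sub>R v) \<longlongrightarrow> 0) at_top"
  proof
    assume "((\<lambda>t. cos (w * t) *\<^sub>R v) \<longlongrightarrow> 0) at_top"
    then show False
    proof (rule not_tendsto0[OF _ v])
      fix N :: real
      obtain n :: nat where n: "N * w / (2 * pi) \<le> real n" using real_arch_simple by blast
      define t where "t = 2 * real n * pi / w"
      have "N * w \<le> 2 * pi * real n" using n by (simp add: field_simps)
      then have "N \<le> t" unfolding t_def using w by (simp add: field_simps)
      moreover have "cos (w * t) = 1" unfolding t_def using w by simp
      ultimately show "\<exists>t\<ge>N. norm v \<le> norm (cos (w * t) *\<^sub>R v)" by auto
    qed
  qed
  with fF PI show ?thesis by blast
qed

lemma part3:
  fixes L b kp ki :: real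
  assumes L: "L > 0" and b: "b > 0"
    and H: "\<forall>(f :: real^1 \<Rightarrow> real^1 \<Rightarrow> real^1) \<in> F_class L b. \<forall>y x.
               PI_solution f kp ki y x \<longrightarrow> (x \<longlongrightarrow> y) at_top"
  shows "(kp, ki) \<in> Omega_pi' L b"
proof (rule ccontr)
  assume "(kp, ki) \<notin> Omega_pi' L b"
  then have nc: "\<not> (kp * b > L \<and> ki > 0)" unfolding Omega_pi'_def by auto
  have "\<exists>(f::real^1 \<Rightarrow> real^1 \<Rightarrow> real^1) \<in> F_class L b. \<exists>y x. PI_solution f kp ki y x \<and> \<not> (x \<longlongrightarrow> y) at_top"
  proof (cases "ki = 0")
    case True
    then show ?thesis using const_counter[OF b L, of kp] by simp
  next
    case ki0: False
    show ?thesis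
    proof (cases "ki < 0")
      case True
      define D where "D = b * b * kp * kp - 4 * b * ki"
      have bk: "- 4 * b * ki > 0" using True b by (simp add: mult_pos_neg)
      have bD: "(b * kp)^2 < D" unfolding D_def using bk by (simp add: power2_eq_square algebra_simps)
      have D0: "D \<ge> 0" using bD zero_le_power2[of "b * kp"] by linarith
      from bD have "b * kp < sqrt D" by (rule real_less_rsqrt)
      then have lp: "(- b * kp + sqrt D) / 2 > 0" by simp
      have "((- b * kp + sqrt D) / 2) * ((- b * kp + sqrt D) / 2) + b * kp * ((- b * kp + sqrt D) / 2) + b * ki = 0"
        using quad_root[of b kp ki] D0 unfolding D_def by simp
      then show ?thesis using exp_counter[OF order_refl L lp] by blast
    next
      case False
      then have kip: "ki > 0" using ki0 by simp
      show ?thesis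
      proof (cases "kp < 0")
        case True
        define B where "B = b + 4 * ki / kp^2"
        have kp2: "kp^2 > 0" using True by simp
        have Bb: "B \<ge> b" unfolding B_def using kip kp2 by simp
        have B0: "B > 0" using Bb b by simp
        define D where "D = B * B * kp * kp - 4 * B * ki"
        have "B * kp^2 - 4 * ki = b * kp^2" unfolding B_def using kp2 by (simp add: field_simps)
        then have "D = B * (b * kp^2)" unfolding D_def by (simp add: algebra_simps power2_eq_square)
        then have D0: "D \<ge> 0" using B0 b by simp
        have "- B * kp > 0" using B0 True by (simp add: mult_pos_neg)
        moreover have "sqrt D \<ge> 0" using D0 by simp
        ultimately have lp: "(- B * kp + sqrt D) / 2 > 0" by (intro divide_pos_pos add_pos_nonneg) simp_all
        have "((- B * kp + sqrt D) / 2) * ((- B * kp + sqrt D) / 2) + B * kp * ((- B * kp + sqrt D) / 2) + B * ki = 0"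
          using quad_root[of B kp ki] D0 unfolding D_def by simp
        then show ?thesis using exp_counter[OF Bb L lp] by blast
      next
        case False
        then have "kp \<ge> 0" by simp
        moreover have "b * kp \<le> L" using nc kip by (auto simp: mult.commute)
        ultimately show ?thesis using osc_counter[OF b L kip] by blast
      qed
    qed
  qed
  with H show False by blast
qed

lemma r1_eq: "(z::real^1) = (z$1) *\<^sub>R 1"
  by (simp add: vec_eq_iff)

lemma r1_inner: "(z::real^1) \<bullet> w = z$1 * w$1"
  by (simp add: inner_vec_def)

lemma r1_norm: "norm (z::real^1) = \<bar>z$1\<bar>"
  by (rule norm_real)

lemma F_scalar:
  fixes f :: "real^1 \<Rightarrow> real^1 \<Rightarrow> real^1"
  assumes "f \<in> F_class L b"
  defines "F \<equiv> \<lambda>a c. (f (a *\<^sub>R 1) (c *\<^sub>R 1))$1"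
  shows "\<And>a c1 c2. (c1 - c2) * (F a c1 - F a c2) \<ge> b * (c1 - c2)^2"
    "\<And>a1 a2 c. \<bar>F a1 c - F a2 c\<bar> \<le> L * \<bar>a1 - a2\<bar>"
    "continuous_on UNIV (\<lambda>p. F (fst p) (snd p))"
    "\<And>z w. f z w = F (z$1) (w$1) *\<^sub>R 1"
proof -
  note P = F_class_props[OF assms(1)]
  show "(c1 - c2) * (F a c1 - F a c2) \<ge> b * (c1 - c2)^2" for a c1 c2
    using P(2)[of "c1 *\<^sub>R 1" "c2 *\<^sub>R 1" "a *\<^sub>R 1"]
    unfolding F_def r1_inner r1_norm by (simp add: algebra_simps)
  show "\<bar>F a1 c - F a2 c\<bar> \<le> L * \<bar>a1 - a2\<bar>" for a1 a2 c
    using P(3)[of "a1 *\<^sub>R 1" "c *\<^sub>R 1" "a2 *\<^sub>R 1"]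
    unfolding F_def r1_norm by (simp add: algebra_simps)
  show "continuous_on UNIV (\<lambda>p. F (fst p) (snd p))"
  proof -
    have "continuous_on UNIV (\<lambda>p. uncurried f ((fst p) *\<^sub>R (1::real^1), (snd p) *\<^sub>R (1::real^1)))"
      by (rule continuous_on_compose2[OF P(1)]) (auto intro!: continuous_intros)
    then have "continuous_on UNIV (\<lambda>p. (uncurried f ((fst p) *\<^sub>R (1::real^1), (snd p) *\<^sub>R (1::real^1)))$1)"
      by (intro continuous_intros)
    then show ?thesis unfolding F_def uncurried_def by simp
  qed
  show "f z w = F (z$1) (w$1) *\<^sub>R 1" for z w
    unfolding F_def by (subst r1_eq) (metis r1_eq)
qed

lemma vd_comp1: "(g has_vector_derivative D) (at t) \<Longrightarrow> ((\<lambda>t. (g t :: real^'n) $ i) has_real_derivative D $ i) (at t)"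
  unfolding has_real_derivative_iff_has_vector_derivative has_vector_derivative_def
  by (drule bounded_linear.has_derivative[OF bounded_linear_vec_nth, of _ _ _ i]) (simp add: mult.commute)

lemma antideriv_exists:
  fixes \<psi> :: "real \<Rightarrow> real"
  assumes c: "continuous_on UNIV \<psi>"
  shows "\<exists>P. P 0 = 0 \<and> (\<forall>s. (P has_real_derivative \<psi> s) (at s))"
proof -
  define P where "P = (\<lambda>s. integral {0..s} \<psi> - integral {s..0} \<psi>)"
  have ci: "continuous_on {a..b} \<psi>" for a b using continuous_on_subset[OF c] by blast
  have int: "\<psi> integrable_on {a..b}" for a b by (rule integrable_continuous_interval[OF ci])
  have Pform: "P s = integral {-R..s} \<psi> - integral {-R..0} \<psi>" if R: "R > 0" "s > -R" for R s
  proof (cases "s \<ge> 0")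
    case True
    have "integral {-R..0} \<psi> + integral {0..s} \<psi> = integral {-R..s} \<psi>"
      by (rule Henstock_Kurzweil_Integration.integral_combine[OF _ True int]) (use R in simp)
    moreover have "integral {s..0} \<psi> = integral {0..s} \<psi> - integral {0..s} \<psi> + integral {s..0} \<psi>" by simp
    moreover have "s > 0 \<Longrightarrow> integral {s..0} \<psi> = 0" by simp
    moreover have "s = 0 \<Longrightarrow> integral {0..s} \<psi> = integral {s..0} \<psi>" by simp
    ultimately show ?thesis unfolding P_def using True by (cases "s = 0") (auto simp: algebra_simps)
  next
    case False
    have "integral {-R..s} \<psi> + integral {s..0} \<psi> = integral {-R..0} \<psi>"
      by (rule Henstock_Kurzweil_Integration.integral_combine[OF _ _ int]) (use R False in auto)
    moreover have "integral {0..s} \<psi> = 0" using False by simp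
    ultimately show ?thesis unfolding P_def by (simp add: algebra_simps)
  qed
  have "(P has_real_derivative \<psi> s) (at s)" for s
  proof -
    define R where "R = \<bar>s\<bar> + 1"
    have R: "R > 0" "s > -R" unfolding R_def by auto
    have "((\<lambda>s'. integral {-R..s'} \<psi>) has_real_derivative \<psi> s) (at s within {-R..R})"
      by (rule integral_has_real_derivative[OF ci]) (use R in \<open>auto simp: R_def\<close>)
    moreover have "at s within {-R..R} = at s"
      by (rule at_within_interior) (auto simp: R_def)
    ultimately have d: "((\<lambda>s'. integral {-R..s'} \<psi> - integral {-R..0} \<psi>) has_real_derivative \<psi> s) (at s)"
      by (auto intro!: derivative_eq_intros)
    show ?thesis
      by (rule has_field_derivative_transform_within_open[OF d, of "{-R<..}"]) (use R Pform in auto)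
  qed
  moreover have "P 0 = 0" unfolding P_def by simp
  ultimately show ?thesis by blast
qed

lemma root_exists:
  fixes g :: "real \<Rightarrow> real"
  assumes c: "continuous_on UNIV g" and b: "b > 0"
    and m: "\<And>c1 c2. (c1 - c2) * (g c1 - g c2) \<ge> b * (c1 - c2)^2"
  shows "\<exists>c. g c = 0"
proof -
  define r where "r = \<bar>g 0\<bar> / b"
  have r: "r \<ge> 0" unfolding r_def using b by simp
  have up: "g r \<ge> 0"
  proof (cases "r = 0")
    case True then have "g 0 = 0" unfolding r_def using b by simp
    then show ?thesis using True by simp
  next
    case False
    then have rp: "r > 0" using r by simp
    have "r * (g r - g 0) \<ge> b * r^2" using m[of r 0] by simp
    then have "g r - g 0 \<ge> b * r" using rp by (simp add: power2_eq_square mult.assoc[symmetric] mult_le_cancel_right)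
    moreover have "b * r = \<bar>g 0\<bar>" unfolding r_def using b by simp
    ultimately show ?thesis by linarith
  qed
  have lo: "g (- r) \<le> 0"
  proof (cases "r = 0")
    case True then have "g 0 = 0" unfolding r_def using b by simp
    then show ?thesis using True by simp
  next
    case False
    then have rp: "r > 0" using r by simp
    have "(- r) * (g (- r) - g 0) \<ge> b * r^2" using m[of "- r" 0] by simp
    then have "r * (g 0 - g (- r)) \<ge> r * (b * r)" by (simp add: power2_eq_square algebra_simps)
    then have "g 0 - g (- r) \<ge> b * r" using rp by (simp add: mult_le_cancel_left_pos)
    moreover have "b * r = \<bar>g 0\<bar>" unfolding r_def using b by simp
    ultimately show ?thesis by linarith
  qed
  obtain c where "- r \<le> c" "c \<le> r" "g c = 0"
    using IVT'[of g "- r" 0 r, OF lo up _ continuous_on_subset[OF c]] r by auto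
  then show ?thesis by blast
qed

lemma P_lower:
  fixes P \<psi> :: "real \<Rightarrow> real"
  assumes P0: "P 0 = 0" and dP: "\<And>s. (P has_real_derivative \<psi> s) (at s)"
    and m: "\<And>s. s * \<psi> s \<ge> b * s^2"
  shows "P s \<ge> b * s^2 / 2"
proof -
  define G where "G = (\<lambda>s. P s - b * s^2 / 2)"
  have dG: "(G has_real_derivative (\<psi> s - b * s)) (at s)" for s
    unfolding G_def by (auto intro!: derivative_eq_intros dP)
  have cG: "continuous_on S G" for S
    using dG by (meson DERIV_continuous continuous_at_imp_continuous_on)
  have G0: "G 0 = 0" unfolding G_def using P0 by simp
  have pos: "\<psi> s - b * s \<ge> 0" if "s > 0" for s
  proof -
    have "s * (\<psi> s - b * s) \<ge> 0" using m[of s] by (simp add: power2_eq_square algebra_simps)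
    then show ?thesis using that by (simp add: zero_le_mult_iff)
  qed
  have neg: "\<psi> s - b * s \<le> 0" if "s < 0" for s
  proof -
    have "s * (\<psi> s - b * s) \<ge> 0" using m[of s] by (simp add: power2_eq_square algebra_simps)
    then show ?thesis using that by (simp add: zero_le_mult_iff)
  qed
  have "G s \<ge> 0"
  proof (cases "s \<ge> 0")
    case True
    have "(\<lambda>s. - G s) s - (\<lambda>s. - G s) 0 \<le> 0 * (s - 0)"
    proof (rule deriv_upper[OF True])
      show "continuous_on {0..s} (\<lambda>s. - G s)" by (intro continuous_intros cG)
      fix t assume "0 < t" "t < s"
      show "((\<lambda>s. - G s) has_real_derivative - (\<psi> t - b * t)) (at t)" by (auto intro!: derivative_eq_intros dG)
      show "- (\<psi> t - b * t) \<le> 0" using pos[OF \<open>0 < t\<close>] by simp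
    qed
    then show ?thesis using G0 by simp
  next
    case False
    have "G 0 - G s \<le> 0 * (0 - s)"
    proof (rule deriv_upper)
      show "s \<le> 0" using False by simp
      show "continuous_on {s..0} G" by (rule cG)
      fix t assume "s < t" "t < 0"
      show "(G has_real_derivative (\<psi> t - b * t)) (at t)" by (rule dG)
      show "\<psi> t - b * t \<le> 0" using neg[OF \<open>t < 0\<close>] .
    qed
    then show ?thesis using G0 by simp
  qed
  then show ?thesis unfolding G_def by simp
qed

lemma part2:
  fixes f :: "real^1 \<Rightarrow> real^1 \<Rightarrow> real^1"
  assumes L: "L > 0" and b: "b > 0" and Om: "(kp, ki) \<in> Omega_pi' L b" and fF: "f \<in> F_class L b"
    and PI: "PI_solution f kp ki y x"
  shows "(x \<longlongrightarrow> y) at_top"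
proof -
  have kpb: "kp * b > L" and ki: "ki > 0" using Om unfolding Omega_pi'_def by auto
  have kp: "kp > 0"
  proof (rule ccontr)
    assume "\<not> kp > 0"
    then have "kp * b \<le> 0" using b by (simp add: mult_nonpos_nonneg)
    then show False using kpb L by simp
  qed
  define \<alpha> where "\<alpha> = kp * b - L"
  have \<alpha>: "\<alpha> > 0" unfolding \<alpha>_def using kpb by linarith
  define F where "F = (\<lambda>a c. (f (a *\<^sub>R 1) (c *\<^sub>R 1))$1)"
  have FM: "\<And>a p q. (p - q) * (F a p - F a q) \<ge> b * (p - q)^2"
    unfolding F_def by (rule F_scalar(1)[OF fF])
  have FL: "\<And>r s c. \<bar>F r c - F s c\<bar> \<le> L * \<bar>r - s\<bar>"
    unfolding F_def by (rule F_scalar(2)[OF fF])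
  have Fc: "continuous_on UNIV (\<lambda>p. F (fst p) (snd p))"
    unfolding F_def by (rule F_scalar(3)[OF fF])
  have Ff: "\<And>z w. f z w = F (z$1) (w$1) *\<^sub>R 1"
    unfolding F_def by (rule F_scalar(4)[OF fF])
  define e where "e = (\<lambda>t. y - x t)"
  define Z where "Z = (\<lambda>t. integral {0..t} e)"
  define u where "u = (\<lambda>t. kp *\<^sub>R e t + ki *\<^sub>R Z t)"
  have ce: "\<And>T. continuous_on {0..T} e" and cZ: "\<And>T. continuous_on {0..T} Z"
    and de: "\<And>t. t > 0 \<Longrightarrow> (e has_vector_derivative - f (x t) (u t)) (at t)"
    and dZ: "\<And>t. t > 0 \<Longrightarrow> (Z has_vector_derivative e t) (at t)"
    using PI_basic[OF PI] unfolding e_def Z_def u_def by auto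
  define y1 where "y1 = y $ 1"
  define Es where "Es = (\<lambda>t. e t $ 1)"
  define Zs where "Zs = (\<lambda>t. Z t $ 1)"
  have cF1: "continuous_on UNIV (\<lambda>c. F a c)" for a
  proof -
    have "continuous_on UNIV (\<lambda>c. (\<lambda>p. F (fst p) (snd p)) (a, c))"
      by (rule continuous_on_compose2[OF Fc]) (auto intro!: continuous_intros)
    then show ?thesis by simp
  qed
  obtain cs where cs: "F y1 cs = 0"
    using root_exists[OF cF1 b FM] by blast
  define \<phi> where "\<phi> = (\<lambda>a s. F (y1 - a) (cs + kp * a + s))"
  define \<psi> where "\<psi> = (\<lambda>s. F y1 (cs + s))"
  define w where "w = (\<lambda>t. ki * Zs t - cs)"
  have feq: "f (x t) (u t) $ 1 = \<phi> (Es t) (w t)" for t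
  proof -
    have "x t $ 1 = y1 - Es t" unfolding Es_def e_def y1_def by simp
    moreover have "u t $ 1 = cs + kp * Es t + w t" unfolding u_def Es_def w_def Zs_def by simp
    ultimately show ?thesis unfolding \<phi>_def using Ff[of "x t" "u t"] by simp
  qed
  have dEs: "(Es has_real_derivative - \<phi> (Es t) (w t)) (at t)" if "t > 0" for t
    using vd_comp1[OF de[OF that], of 1] feq[of t] unfolding Es_def by simp
  have dw: "(w has_real_derivative ki * Es t) (at t)" if "t > 0" for t
  proof -
    have "(Zs has_real_derivative Es t) (at t)" using vd_comp1[OF dZ[OF that], of 1] unfolding Zs_def Es_def .
    then show ?thesis unfolding w_def by (auto intro!: derivative_eq_intros)
  qed
  have cEs: "continuous_on {0..T} Es" for T unfolding Es_def by (intro continuous_intros ce)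
  have cw: "continuous_on {0..T} w" for T unfolding w_def Zs_def by (intro continuous_intros cZ)
  have c\<psi>: "continuous_on UNIV \<psi>"
  proof -
    have "continuous_on UNIV (\<lambda>s. (\<lambda>p. F (fst p) (snd p)) (y1, cs + s))"
      by (rule continuous_on_compose2[OF Fc]) (auto intro!: continuous_intros)
    then show ?thesis unfolding \<psi>_def by simp
  qed
  obtain P where P0: "P 0 = 0" and dP: "\<And>s. (P has_real_derivative \<psi> s) (at s)"
    using antideriv_exists[OF c\<psi>] by blast
  have \<psi>m: "s * \<psi> s \<ge> b * s^2" for s
    using FM[where a=y1 and p="cs + s" and q=cs] cs unfolding \<psi>_def by simp
  have Plow: "P s \<ge> b * s^2 / 2" for s by (rule P_lower[OF P0 dP \<psi>m])
  have cP: "continuous_on UNIV P"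
    using dP by (meson DERIV_continuous continuous_at_imp_continuous_on)
  have key: "a * (\<phi> a s - \<psi> s) \<ge> \<alpha> * a^2" for a s
  proof -
    define d1 where "d1 = F (y1 - a) (cs + s + kp * a) - F (y1 - a) (cs + s)"
    define d2 where "d2 = F (y1 - a) (cs + s) - F y1 (cs + s)"
    have h1: "(kp * a) * d1 \<ge> b * (kp * a)^2"
      using FM[where a="y1 - a" and p="cs + s + kp * a" and q="cs + s"] unfolding d1_def by simp
    have "kp * (a * d1) \<ge> kp * (b * kp * a^2)" using h1 by (simp add: power2_eq_square algebra_simps)
    then have a1: "a * d1 \<ge> b * kp * a^2" using kp by simp
    have "\<bar>d2\<bar> \<le> L * \<bar>a\<bar>" using FL[where r="y1 - a" and s=y1 and c="cs + s"] unfolding d2_def by simp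
    then have "\<bar>a\<bar> * \<bar>d2\<bar> \<le> \<bar>a\<bar> * (L * \<bar>a\<bar>)" by (intro mult_left_mono) simp_all
    also have "\<bar>a\<bar> * (L * \<bar>a\<bar>) = L * a^2" by (simp add: power2_eq_square abs_mult_self_eq algebra_simps)
    finally have "\<bar>a * d2\<bar> \<le> L * a^2" by (simp add: abs_mult)
    then have a2: "a * d2 \<ge> - L * a^2" by linarith
    have "\<phi> a s - \<psi> s = d1 + d2" unfolding \<phi>_def \<psi>_def d1_def d2_def by (simp add: add_ac)
    then have "a * (\<phi> a s - \<psi> s) = a * d1 + a * d2" by (simp add: algebra_simps)
    also have "\<dots> \<ge> b * kp * a^2 - L * a^2" using a1 a2 by linarith
    finally show ?thesis unfolding \<alpha>_def by (simp add: algebra_simps)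
  qed
  define V where "V = (\<lambda>t. P (w t) / ki + (Es t)^2 / 2)"
  define Vd where "Vd = (\<lambda>t. - (Es t * (\<phi> (Es t) (w t) - \<psi> (w t))))"
  have dV: "(V has_real_derivative Vd t) (at t)" if "t > 0" for t
  proof -
    have "((\<lambda>t. P (w t)) has_real_derivative \<psi> (w t) * (ki * Es t)) (at t)"
      by (rule DERIV_chain2[OF dP dw[OF that]])
    then have "(V has_real_derivative (\<psi> (w t) * (ki * Es t) / ki + 2 * Es t * (- \<phi> (Es t) (w t)) / 2)) (at t)"
      unfolding V_def by (auto intro!: derivative_eq_intros dEs that)
    moreover have "\<psi> (w t) * (ki * Es t) / ki + 2 * Es t * (- \<phi> (Es t) (w t)) / 2 = Vd t"
      unfolding Vd_def using ki by (simp add: algebra_simps)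
    ultimately show ?thesis by simp
  qed
  have Vd_le: "Vd t \<le> - \<alpha> * (Es t)^2" for t unfolding Vd_def using key[of "Es t" "w t"] by simp
  have cV: "continuous_on {0..T} V" for T
    unfolding V_def using ki by (intro continuous_intros cEs continuous_on_compose2[OF cP cw]) auto
  have Vlow: "V t \<ge> b * (w t)^2 / (2 * ki) + (Es t)^2 / 2" for t
  proof -
    have "P (w t) / ki \<ge> (b * (w t)^2 / 2) / ki" by (rule divide_right_mono[OF Plow[of "w t"]]) (use ki in simp)
    then show ?thesis unfolding V_def by simp
  qed
  have V0: "V t \<ge> 0" for t
  proof -
    have "b * (w t)^2 / (2 * ki) \<ge> 0" using b ki by simp
    moreover have "(Es t)^2 / 2 \<ge> 0" by simp
    ultimately show ?thesis using Vlow[of t] by linarith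
  qed
  have Vmono: "V s \<le> V t" if "0 \<le> t" "t \<le> s" for t s
  proof -
    have "V s - V t \<le> 0 * (s - t)"
    proof (rule deriv_upper[OF that(2)])
      show "continuous_on {t..s} V" using continuous_on_subset[OF cV[of s]] that by auto
      fix \<sigma> assume "t < \<sigma>" "\<sigma> < s"
      then have "\<sigma> > 0" using that by simp
      show "(V has_real_derivative Vd \<sigma>) (at \<sigma>)" by (rule dV[OF \<open>\<sigma> > 0\<close>])
      have "\<alpha> * (Es \<sigma>)^2 \<ge> 0" using \<alpha> by simp
      then show "Vd \<sigma> \<le> 0" using Vd_le[of \<sigma>] by linarith
    qed
    then show ?thesis by simp
  qed
  have Vdrop: "V (t + h) - V t \<le> - (\<alpha> * \<eta>2^2) * h"
    if "0 \<le> t" "0 \<le> h" "0 \<le> \<eta>2" "\<And>\<sigma>. t \<le> \<sigma> \<Longrightarrow> \<sigma> \<le> t + h \<Longrightarrow> \<bar>Es \<sigma>\<bar> \<ge> \<eta>2" for t h \<eta>2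
  proof -
    have "V (t + h) - V t \<le> - (\<alpha> * \<eta>2^2) * ((t + h) - t)"
    proof (rule deriv_upper)
      show "t \<le> t + h" using that by simp
      show "continuous_on {t..t+h} V" using continuous_on_subset[OF cV[of "t+h"]] that by auto
      fix \<sigma> assume s: "t < \<sigma>" "\<sigma> < t + h"
      then have "\<sigma> > 0" using that by simp
      show "(V has_real_derivative Vd \<sigma>) (at \<sigma>)" by (rule dV[OF \<open>\<sigma> > 0\<close>])
      have "\<eta>2^2 \<le> (Es \<sigma>)^2"
        using that(4)[of \<sigma>] s that(3) by (metis abs_ge_zero less_eq_real_def power2_abs power_mono)
      then have "\<alpha> * \<eta>2^2 \<le> \<alpha> * (Es \<sigma>)^2" using \<alpha> by simp
      then show "Vd \<sigma> \<le> - (\<alpha> * \<eta>2^2)" using Vd_le[of \<sigma>] by simp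
    qed
    then show ?thesis by simp
  qed
  define R where "R = sqrt (2 * V 0) + sqrt (2 * ki * V 0 / b)"
  have bnd: "\<bar>Es t\<bar> \<le> R \<and> \<bar>w t\<bar> \<le> R" if "t \<ge> 0" for t
  proof -
    have Vt: "V t \<le> V 0" using Vmono[of 0 t] that by simp
    have wp: "b * (w t)^2 / (2 * ki) \<ge> 0" using b ki by simp
    have ep: "(Es t)^2 / 2 \<ge> 0" by simp
    have "(Es t)^2 \<le> 2 * V 0" using Vlow[of t] Vt wp by linarith
    then have e1: "\<bar>Es t\<bar> \<le> sqrt (2 * V 0)" by (intro real_le_rsqrt) simp
    have "b * (w t)^2 / (2 * ki) \<le> V 0" using Vlow[of t] Vt ep by linarith
    then have "(w t)^2 \<le> 2 * ki * V 0 / b" using b ki by (simp add: field_simps)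
    then have w1: "\<bar>w t\<bar> \<le> sqrt (2 * ki * V 0 / b)" by (intro real_le_rsqrt) simp
    have "sqrt (2 * V 0) \<ge> 0" "sqrt (2 * ki * V 0 / b) \<ge> 0" using V0[of 0] ki b by simp_all
    then show ?thesis using e1 w1 unfolding R_def by linarith
  qed
  have c\<phi>: "continuous_on UNIV (\<lambda>p. \<phi> (fst p) (snd p))"
  proof -
    have "continuous_on UNIV (\<lambda>q. (\<lambda>p. F (fst p) (snd p)) (y1 - fst q, cs + kp * fst q + snd q))"
      by (rule continuous_on_compose2[OF Fc]) (auto intro!: continuous_intros)
    then show ?thesis unfolding \<phi>_def by simp
  qed
  obtain M where M: "\<And>p. p \<in> {-R..R} \<times> {-R..R} \<Longrightarrow> norm (\<phi> (fst p) (snd p)) \<le> M"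
    using continuous_on_compact_bound[OF compact_Times[OF compact_Icc compact_Icc] continuous_on_subset[OF c\<phi>]]
    by blast
  define M' where "M' = \<bar>M\<bar> + 1"
  have M': "M' > 0" unfolding M'_def by simp
  have \<phi>b: "\<bar>\<phi> (Es t) (w t)\<bar> \<le> M'" if "t \<ge> 0" for t
  proof -
    have "\<bar>Es t\<bar> \<le> R" "\<bar>w t\<bar> \<le> R" using bnd[OF that] by auto
    then have "- R \<le> Es t \<and> Es t \<le> R \<and> - R \<le> w t \<and> w t \<le> R" by linarith
    then have "\<bar>\<phi> (Es t) (w t)\<bar> \<le> M" using M[of "(Es t, w t)"] by auto
    then show ?thesis unfolding M'_def by linarith
  qed
  have Lip: "\<bar>Es s - Es t\<bar> \<le> M' * (s - t)" if "0 \<le> t" "t \<le> s" for t s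
  proof -
    have c: "continuous_on {t..s} Es" using continuous_on_subset[OF cEs[of s]] that by auto
    have "Es s - Es t \<le> M' * (s - t)"
    proof (rule deriv_upper[OF that(2) c])
      fix \<sigma> assume "t < \<sigma>" "\<sigma> < s"
      then have "\<sigma> > 0" using that by simp
      show "(Es has_real_derivative - \<phi> (Es \<sigma>) (w \<sigma>)) (at \<sigma>)" by (rule dEs[OF \<open>\<sigma> > 0\<close>])
      show "- \<phi> (Es \<sigma>) (w \<sigma>) \<le> M'" using \<phi>b[of \<sigma>] \<open>\<sigma> > 0\<close> by simp
    qed
    moreover have "(\<lambda>t. - Es t) s - (\<lambda>t. - Es t) t \<le> M' * (s - t)"
    proof (rule deriv_upper[OF that(2)])
      show "continuous_on {t..s} (\<lambda>t. - Es t)" by (intro continuous_intros c)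
      fix \<sigma> assume "t < \<sigma>" "\<sigma> < s"
      then have "\<sigma> > 0" using that by simp
      show "((\<lambda>t. - Es t) has_real_derivative - (- \<phi> (Es \<sigma>) (w \<sigma>))) (at \<sigma>)"
        by (auto intro!: derivative_eq_intros dEs[OF \<open>\<sigma> > 0\<close>])
      show "- (- \<phi> (Es \<sigma>) (w \<sigma>)) \<le> M'" using \<phi>b[of \<sigma>] \<open>\<sigma> > 0\<close> by simp
    qed
    ultimately show ?thesis by simp
  qed
  have Es0: "(Es \<longlongrightarrow> 0) at_top"
  proof (rule ccontr)
    assume "\<not> (Es \<longlongrightarrow> 0) at_top"
    then obtain \<eta> where \<eta>: "\<eta> > 0" and nev: "\<not> eventually (\<lambda>t. dist (Es t) 0 < \<eta>) at_top"
      unfolding tendsto_iff by blast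
    have far: "\<exists>t\<ge>N. \<bar>Es t\<bar> \<ge> \<eta>" for N
      using nev unfolding eventually_at_top_linorder by (auto simp: not_less)
    define h where "h = \<eta> / (2 * M')"
    have h: "h > 0" unfolding h_def using \<eta> M' by simp
    define \<kappa> where "\<kappa> = (\<alpha> * (\<eta>/2)^2) * h"
    have \<kappa>: "\<kappa> > 0" unfolding \<kappa>_def using \<alpha> \<eta> h by simp
    have step: "V (t + h) \<le> V t - \<kappa>" if t: "t \<ge> 0" "\<bar>Es t\<bar> \<ge> \<eta>" for t
    proof -
      have "\<bar>Es \<sigma>\<bar> \<ge> \<eta> / 2" if "t \<le> \<sigma>" "\<sigma> \<le> t + h" for \<sigma>
      proof -
        have "\<bar>Es \<sigma> - Es t\<bar> \<le> M' * (\<sigma> - t)" using Lip[of t \<sigma>] t that by simp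
        also have "\<dots> \<le> M' * h" using that M' by (simp add: mult_left_mono)
        also have "\<dots> = \<eta> / 2" unfolding h_def using M' by simp
        finally show ?thesis using t(2) by linarith
      qed
      from Vdrop[OF t(1) less_imp_le[OF h] _ this] \<eta> show ?thesis unfolding \<kappa>_def by simp
    qed
    have iter: "\<exists>t\<ge>0. V t \<le> V 0 - real n * \<kappa>" for n
    proof (induction n)
      case 0 then show ?case by (intro exI[of _ 0]) simp
    next
      case (Suc n)
      then obtain t where t: "t \<ge> 0" "V t \<le> V 0 - real n * \<kappa>" by blast
      obtain s where s: "s \<ge> t" "\<bar>Es s\<bar> \<ge> \<eta>" using far[of t] by blast
      have "V (s + h) \<le> V s - \<kappa>" using step[of s] s t by simp
      also have "V s \<le> V t" using Vmono[of t s] t s by simp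
      finally have "V (s + h) \<le> V 0 - real (Suc n) * \<kappa>" using t by (simp add: algebra_simps)
      moreover have "s + h \<ge> 0" using s t h by simp
      ultimately show ?case by blast
    qed
    obtain n :: nat where "V 0 < real n * \<kappa>" using ex_less_of_nat_mult[OF \<kappa>] by blast
    moreover obtain t where "t \<ge> 0" "V t \<le> V 0 - real n * \<kappa>" using iter by blast
    ultimately show False using V0[of t] by simp
  qed
  have "((\<lambda>t. Es t *\<^sub>R (1::real^1)) \<longlongrightarrow> 0 *\<^sub>R 1) at_top" by (intro tendsto_intros Es0)
  moreover have "e = (\<lambda>t. Es t *\<^sub>R (1::real^1))" unfolding Es_def by (rule ext, rule r1_eq)
  ultimately have "(e \<longlongrightarrow> 0) at_top" by simp
  then have "((\<lambda>t. y - e t) \<longlongrightarrow> y - 0) at_top" by (intro tendsto_intros)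
  then show ?thesis unfolding e_def by simp
qed

theorem theorem3p3:
  fixes L b :: real
  assumes "L > 0" and "b > 0"
  shows "(\<forall>kp ki. (kp, ki) \<in> Omega_pi L b \<longrightarrow>
            (\<forall>(f :: real^'n \<Rightarrow> real^'n \<Rightarrow> real^'n) \<in> F_class L b. \<forall>y x.
               PI_solution f kp ki y x \<longrightarrow> (x \<longlongrightarrow> y) at_top))
       \<and> (\<forall>kp ki. (kp, ki) \<in> Omega_pi' L b \<longrightarrow>
            (\<forall>(f :: real^1 \<Rightarrow> real^1 \<Rightarrow> real^1) \<in> F_class L b. \<forall>y x.
               PI_solution f kp ki y x \<longrightarrow> (x \<longlongrightarrow> y) at_top))
       \<and> (\<forall>kp ki.
            (\<forall>(f :: real^1 \<Rightarrow> real^1 \<Rightarrow> real^1) \<in> F_class L b. \<forall>y x.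
               PI_solution f kp ki y x \<longrightarrow> (x \<longlongrightarrow> y) at_top)
            \<longrightarrow> (kp, ki) \<in> Omega_pi' L b)"
proof -
  have P1: "\<forall>kp ki. (kp, ki) \<in> Omega_pi L b \<longrightarrow>
            (\<forall>(f :: real^'n \<Rightarrow> real^'n \<Rightarrow> real^'n) \<in> F_class L b. \<forall>y x.
               PI_solution f kp ki y x \<longrightarrow> (x \<longlongrightarrow> y) at_top)"
    using part1[OF assms] by blast
  have P2: "\<forall>kp ki. (kp, ki) \<in> Omega_pi' L b \<longrightarrow>
            (\<forall>(f :: real^1 \<Rightarrow> real^1 \<Rightarrow> real^1) \<in> F_class L b. \<forall>y x.
               PI_solution f kp ki y x \<longrightarrow> (x \<longlongrightarrow> y) at_top)"
    using part2[OF assms] by blast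
  have P3: "\<forall>kp ki.
            (\<forall>(f :: real^1 \<Rightarrow> real^1 \<Rightarrow> real^1) \<in> F_class L b. \<forall>y x.
               PI_solution f kp ki y x \<longrightarrow> (x \<longlongrightarrow> y) at_top)
            \<longrightarrow> (kp, ki) \<in> Omega_pi' L b"
    using part3[OF assms] by blast
  show ?thesis using P1 P2 P3 by blast
qed

end
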